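(* For every linkage $\mathcal{L}=(G,\ell)$, the annotation map $\mathrm{Annot}_{\mathcal{L}}:(\mathbb{R}^2)^{V}\to(\mathbb{R}^2)^{V}\times\mathbb{R}^{E\times E}$ is injective, semi-algebraic, and continuous on the set of nontouching configurations of linkages $\epsilon$-related to $\mathcal L$ (for any $\epsilon\ge0$), i.e. on $\bigcup_{\epsilon\ge 0}\mathrm{NConf}_\epsilon(\mathcal L)$.
   Context: A linkage is a pair $\mathcal L=(G,\ell)$ with $G=(V,E)$ a finite graph and $\ell:E\to\mathbb R_{\ge0}$ (edges are called bars; zero lengths are allowed). A configuration of $\mathcal L$ is a map $C:V\to\mathbb R^2$ with $|C(v)-C(w)|=\ell(v,w)$ for every bar $(v,w)$. Two linkages $(G_1,\ell_1),(G_2,\ell_2)$ are $\epsilon$-related if $G_1=G_2$ and $|\ell_1(e)-\ell_2(e)|\le\epsilon$ for all edges $e$. A configuration $C$ of a linkage $\mathcal L'=(G,\ell')$ is nontouching if no two bars intersect except at endpoints, and two vertices have the same position if and only if they are joined in $G$ by a path of bars of $\ell'$-length zero (vertices joined by such a path are regarded as merged into one vertex, so bars incident to them may meet at that common point). $\mathrm{NConf}_\epsilon(\mathcal L)$ denotes the set of nontouching configurations of linkages $\epsilon$-related to $\mathcal L$ (as maps $V\to\mathbb R^2$). Order function: for oriented segments $e_1,e_2$, in coordinates where $e_1$ runs from $(0,0)$ to $(l,0)$, let $d_\pm(e_1,e_2)=\mathrm{len}\{x\in[0,l]:\exists y,\ \pm y\ge 0,\ (x,y)\in e_2\}$ and $\mathrm{Ord}(e_1,e_2)=d_+-d_-$.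 Each edge is given a fixed canonical orientation; for $e=(u,v)$ write $C(e)$ for the oriented segment from $C(u)$ to $C(v)$. The annotation map is $\mathrm{Annot}_{\mathcal L}(C)=(C,A)$ where $A_{i,j}=\mathrm{Ord}(C(e_i),C(e_j))$ for $e_i,e_j\in E$. *)

theory Defs
  imports "HOL-Analysis.Analysis"
begin

text \<open>A linkage: vertex set = finite type 'v, edge set E :: 'e set (over a finite type 'e),
  each edge e has a canonical orientation from src e to tgt e; lengths ell :: 'e => real.\<close>

definition simple_graph :: "'e set \<Rightarrow> ('e \<Rightarrow> 'v) \<Rightarrow> ('e \<Rightarrow> 'v) \<Rightarrow> bool" where
  "simple_graph E src tgt \<longleftrightarrow>
     (\<forall>e\<in>E. src e \<noteq> tgt e) \<and>
     (\<forall>e\<in>E. \<forall>e'\<in>E. e \<noteq> e' \<longrightarrow> {src e, tgt e} \<noteq> {src e', tgt e'})"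

definition linkage :: "'e set \<Rightarrow> ('e \<Rightarrow> 'v) \<Rightarrow> ('e \<Rightarrow> 'v) \<Rightarrow> ('e \<Rightarrow> real) \<Rightarrow> bool" where
  "linkage E src tgt ell \<longleftrightarrow> simple_graph E src tgt \<and> (\<forall>e\<in>E. ell e \<ge> 0)"

definition is_configuration ::
  "'e set \<Rightarrow> ('e \<Rightarrow> 'v::finite) \<Rightarrow> ('e \<Rightarrow> 'v) \<Rightarrow> ('e \<Rightarrow> real) \<Rightarrow> (real^2)^'v \<Rightarrow> bool" where
  "is_configuration E src tgt ell C \<longleftrightarrow>
     (\<forall>e\<in>E. dist (C $ src e) (C $ tgt e) = ell e)"

definition eps_related :: "'e set \<Rightarrow> real \<Rightarrow> ('e \<Rightarrow> real) \<Rightarrow> ('e \<Rightarrow> real) \<Rightarrow> bool" where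
  "eps_related E eps ell ell' \<longleftrightarrow> (\<forall>e\<in>E. \<bar>ell e - ell' e\<bar> \<le> eps)"

definition zero_joined ::
  "'e set \<Rightarrow> ('e \<Rightarrow> 'v) \<Rightarrow> ('e \<Rightarrow> 'v) \<Rightarrow> ('e \<Rightarrow> real) \<Rightarrow> 'v \<Rightarrow> 'v \<Rightarrow> bool" where
  "zero_joined E src tgt ell u v \<longleftrightarrow>
     (let Z = {(src e, tgt e) | e. e \<in> E \<and> ell e = 0} in (u, v) \<in> (Z \<union> Z\<inverse>)\<^sup>*)"

definition bar_segment :: "('e \<Rightarrow> 'v::finite) \<Rightarrow> ('e \<Rightarrow> 'v) \<Rightarrow> (real^2)^'v \<Rightarrow> 'e \<Rightarrow> (real^2) set" where
  "bar_segment src tgt C e = closed_segment (C $ src e) (C $ tgt e)"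

definition nontouching ::
  "'e set \<Rightarrow> ('e \<Rightarrow> 'v::finite) \<Rightarrow> ('e \<Rightarrow> 'v) \<Rightarrow> ('e \<Rightarrow> real) \<Rightarrow> (real^2)^'v \<Rightarrow> bool" where
  "nontouching E src tgt ell C \<longleftrightarrow>
     (\<forall>e1\<in>E. \<forall>e2\<in>E. e1 \<noteq> e2 \<longrightarrow>
        bar_segment src tgt C e1 \<inter> bar_segment src tgt C e2
          \<subseteq> {C $ src e1, C $ tgt e1} \<inter> {C $ src e2, C $ tgt e2}) \<and>
     (\<forall>u v. C $ u = C $ v \<longleftrightarrow> zero_joined E src tgt ell u v)"

definition NConf ::
  "'e set \<Rightarrow> ('e \<Rightarrow> 'v::finite) \<Rightarrow> ('e \<Rightarrow> 'v) \<Rightarrow> ('e \<Rightarrow> real) \<Rightarrow> real \<Rightarrow> ((real^2)^'v) set" where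
  "NConf E src tgt ell eps =
     {C. \<exists>ell'. linkage E src tgt ell' \<and> eps_related E eps ell ell' \<and>
                is_configuration E src tgt ell' C \<and> nontouching E src tgt ell' C}"

text \<open>Coordinates of z in the frame where the oriented segment p->q runs from (0,0) to (l,0),
  l = |q - p| (rotation + translation; y-axis is the positive 90-degree rotation of q - p).\<close>
definition xcoord :: "real^2 \<Rightarrow> real^2 \<Rightarrow> real^2 \<Rightarrow> real" where
  "xcoord p q z = ((z - p) \<bullet> (q - p)) / dist p q"

definition ycoord :: "real^2 \<Rightarrow> real^2 \<Rightarrow> real^2 \<Rightarrow> real" where
  "ycoord p q z = ((q - p) $ 1 * (z - p) $ 2 - (q - p) $ 2 * (z - p) $ 1) / dist p q"

definition d_plus :: "real^2 \<Rightarrow> real^2 \<Rightarrow> real^2 \<Rightarrow> real^2 \<Rightarrow> real" where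
  "d_plus p q r s = measure lebesgue
     {x. x \<in> {0..dist p q} \<and> (\<exists>z\<in>closed_segment r s. xcoord p q z = x \<and> ycoord p q z \<ge> 0)}"

definition d_minus :: "real^2 \<Rightarrow> real^2 \<Rightarrow> real^2 \<Rightarrow> real^2 \<Rightarrow> real" where
  "d_minus p q r s = measure lebesgue
     {x. x \<in> {0..dist p q} \<and> (\<exists>z\<in>closed_segment r s. xcoord p q z = x \<and> ycoord p q z \<le> 0)}"

text \<open>Ord(e1, e2) for e1 the oriented segment p->q and e2 the oriented segment r->s.\<close>
definition Ord :: "real^2 \<Rightarrow> real^2 \<Rightarrow> real^2 \<Rightarrow> real^2 \<Rightarrow> real" where
  "Ord p q r s = d_plus p q r s - d_minus p q r s"

text \<open>Annotation map. The matrix A is indexed by E x E; entries outside E x E are set to 0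
  (so the target R^(E x E) is embedded in real^('e x 'e)).\<close>
definition Annot ::
  "'e set \<Rightarrow> ('e::finite \<Rightarrow> 'v::finite) \<Rightarrow> ('e \<Rightarrow> 'v) \<Rightarrow> (real^2)^'v \<Rightarrow> ((real^2)^'v) \<times> (real^('e \<times> 'e))" where
  "Annot E src tgt C =
     (C, \<chi> ij. if fst ij \<in> E \<and> snd ij \<in> E
               then Ord (C $ src (fst ij)) (C $ tgt (fst ij)) (C $ src (snd ij)) (C $ tgt (snd ij))
               else 0)"

inductive_set poly_fun :: "('a::euclidean_space \<Rightarrow> real) set" where
  const: "(\<lambda>x. c) \<in> poly_fun"
| coord: "b \<in> Basis \<Longrightarrow> (\<lambda>x. x \<bullet> b) \<in> poly_fun"
| add: "p \<in> poly_fun \<Longrightarrow> q \<in> poly_fun \<Longrightarrow> (\<lambda>x. p x + q x) \<in> poly_fun"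
| mult: "p \<in> poly_fun \<Longrightarrow> q \<in> poly_fun \<Longrightarrow> (\<lambda>x. p x * q x) \<in> poly_fun"

inductive_set semialgebraic :: "('a::euclidean_space) set set" where
  zero: "p \<in> poly_fun \<Longrightarrow> {x. p x = 0} \<in> semialgebraic"
| pos: "p \<in> poly_fun \<Longrightarrow> {x. p x > 0} \<in> semialgebraic"
| un: "A \<in> semialgebraic \<Longrightarrow> B \<in> semialgebraic \<Longrightarrow> A \<union> B \<in> semialgebraic"
| int: "A \<in> semialgebraic \<Longrightarrow> B \<in> semialgebraic \<Longrightarrow> A \<inter> B \<in> semialgebraic"
| compl: "A \<in> semialgebraic \<Longrightarrow> - A \<in> semialgebraic"

definition semialgebraic_map_on ::
  "'a::euclidean_space set \<Rightarrow> ('a \<Rightarrow> 'b::euclidean_space) \<Rightarrow> bool" where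
  "semialgebraic_map_on S f \<longleftrightarrow> {(x, f x) | x. x \<in> S} \<in> semialgebraic"

end

theory Submission
  imports Defs
begin


lemma poly_diff: "p \<in> poly_fun \<Longrightarrow> q \<in> poly_fun \<Longrightarrow> (\<lambda>x. p x - q x) \<in> poly_fun"
proof -
  assume "p \<in> poly_fun" "q \<in> poly_fun"
  then have "(\<lambda>x. p x + (\<lambda>x. -1) x * q x) \<in> poly_fun" by (intro poly_fun.intros)
  then show ?thesis by simp
qed

lemma poly_sum: "finite A \<Longrightarrow> (\<And>a. a \<in> A \<Longrightarrow> f a \<in> poly_fun) \<Longrightarrow> (\<lambda>x. \<Sum>a\<in>A. f a x) \<in> poly_fun"
proof (induction A rule: finite_induct)
  case empty
  have "(\<lambda>x. \<Sum>a\<in>{}. f a x) = (\<lambda>x. 0)" by simp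
  then show ?case using poly_fun.const[of 0] by simp
next
  case (insert a A)
  have e: "(\<lambda>x. \<Sum>a\<in>insert a A. f a x) = (\<lambda>x. f a x + (\<Sum>a\<in>A. f a x))"
    using insert.hyps by simp
  have "f a \<in> poly_fun" using insert.prems by simp
  moreover have "(\<lambda>x. \<Sum>a\<in>A. f a x) \<in> poly_fun" using insert.IH insert.prems by simp
  ultimately have "(\<lambda>x. f a x + (\<Sum>a\<in>A. f a x)) \<in> poly_fun" by (rule poly_fun.add)
  then show ?case unfolding e .
qed

lemma poly_linear: fixes f :: "'a::euclidean_space \<Rightarrow> real" assumes "linear f" shows "f \<in> poly_fun"
proof -
  have fx: "f x = (\<Sum>b\<in>Basis. (\<lambda>b x. (x \<bullet> b) * f b) b x)" for x
  proof -
    have "f x = f (\<Sum>b\<in>Basis. (x \<bullet> b) *\<^sub>R b)" by (simp only: euclidean_representation)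
    also have "\<dots> = (\<Sum>b\<in>Basis. f ((x \<bullet> b) *\<^sub>R b))" by (rule linear_sum[OF assms])
    also have "\<dots> = (\<Sum>b\<in>Basis. (x \<bullet> b) * f b)"
      by (rule sum.cong) (simp_all only: linear_scale[OF assms] real_scaleR_def)
    finally show ?thesis by simp
  qed
  have "f = (\<lambda>x. \<Sum>b\<in>Basis. (\<lambda>b x. (x \<bullet> b) * f b) b x)" by (rule ext) (rule fx)
  also have "\<dots> \<in> poly_fun"
  proof (rule poly_sum)
    fix b :: 'a assume "b \<in> Basis"
    then show "(\<lambda>x. x \<bullet> b * f b) \<in> poly_fun" by (rule poly_fun.mult[OF poly_fun.coord poly_fun.const])
  qed simp
  finally show ?thesis .
qed

definition sa :: "('a::euclidean_space \<Rightarrow> bool) \<Rightarrow> bool" where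
  "sa P \<longleftrightarrow> {x. P x} \<in> semialgebraic"

lemma sa_eq0: "p \<in> poly_fun \<Longrightarrow> sa (\<lambda>x. p x = 0)"
  unfolding sa_def by (rule semialgebraic.zero)
lemma sa_pos: "p \<in> poly_fun \<Longrightarrow> sa (\<lambda>x. p x > 0)"
  unfolding sa_def by (rule semialgebraic.pos)
lemma sa_conj: "sa P \<Longrightarrow> sa Q \<Longrightarrow> sa (\<lambda>x. P x \<and> Q x)"
  unfolding sa_def Collect_conj_eq by (rule semialgebraic.int)
lemma sa_disj: "sa P \<Longrightarrow> sa Q \<Longrightarrow> sa (\<lambda>x. P x \<or> Q x)"
  unfolding sa_def Collect_disj_eq by (rule semialgebraic.un)
lemma sa_not: "sa P \<Longrightarrow> sa (\<lambda>x. \<not> P x)"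
  unfolding sa_def Collect_neg_eq by (rule semialgebraic.compl)
lemma sa_imp: assumes "sa P" "sa Q" shows "sa (\<lambda>x. P x \<longrightarrow> Q x)"
proof -
  have "sa (\<lambda>x. \<not> P x \<or> Q x)" by (rule sa_disj[OF sa_not[OF assms(1)] assms(2)])
  then show ?thesis by (simp only: imp_conv_disj)
qed
lemma sa_iff: assumes "sa P" "sa Q" shows "sa (\<lambda>x. P x \<longleftrightarrow> Q x)"
proof -
  have "sa (\<lambda>x. (P x \<longrightarrow> Q x) \<and> (Q x \<longrightarrow> P x))"
    by (rule sa_conj[OF sa_imp[OF assms] sa_imp[OF assms(2,1)]])
  then show ?thesis by (simp only: iff_conv_conj_imp)
qed
lemma sa_True: "sa (\<lambda>x. True)"
proof -
  have "sa (\<lambda>x. (\<lambda>x. 0::real) x = 0)" by (rule sa_eq0) (rule poly_fun.const)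
  then show ?thesis by (simp only: refl)
qed
lemma sa_False: "sa (\<lambda>x. False)"
  using sa_not[OF sa_True] by (simp only: not_True_eq_False)
lemma sa_const: "sa (\<lambda>x. b)"
  by (cases b) (simp_all only: sa_True sa_False)
lemma sa_eq: "p \<in> poly_fun \<Longrightarrow> q \<in> poly_fun \<Longrightarrow> sa (\<lambda>x. p x = q x)"
  using sa_eq0[OF poly_diff, of p q] by simp
lemma sa_less: "p \<in> poly_fun \<Longrightarrow> q \<in> poly_fun \<Longrightarrow> sa (\<lambda>x. p x < q x)"
  using sa_pos[OF poly_diff, of q p] by simp
lemma sa_le: "p \<in> poly_fun \<Longrightarrow> q \<in> poly_fun \<Longrightarrow> sa (\<lambda>x. p x \<le> q x)"
  using sa_not[OF sa_less, of q p] by (simp add: not_less)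
lemma sa_ball: "finite A \<Longrightarrow> (\<And>a. a \<in> A \<Longrightarrow> sa (\<lambda>x. Q x a)) \<Longrightarrow> sa (\<lambda>x. \<forall>a\<in>A. Q x a)"
proof (induction A rule: finite_induct)
  case empty then show ?case using sa_True by simp
next
  case (insert a A)
  have h1: "sa (\<lambda>x. Q x a)" using insert.prems by simp
  have h2: "sa (\<lambda>x. \<forall>a\<in>A. Q x a)" using insert.IH insert.prems by simp
  have "sa (\<lambda>x. Q x a \<and> (\<forall>a\<in>A. Q x a))" by (rule sa_conj[OF h1 h2])
  then show ?case by simp
qed
lemma sa_bex: "finite A \<Longrightarrow> (\<And>a. a \<in> A \<Longrightarrow> sa (\<lambda>x. Q x a)) \<Longrightarrow> sa (\<lambda>x. \<exists>a\<in>A. Q x a)"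
proof (induction A rule: finite_induct)
  case empty then show ?case using sa_False by simp
next
  case (insert a A)
  have h1: "sa (\<lambda>x. Q x a)" using insert.prems by simp
  have h2: "sa (\<lambda>x. \<exists>a\<in>A. Q x a)" using insert.IH insert.prems by simp
  have "sa (\<lambda>x. Q x a \<or> (\<exists>a\<in>A. Q x a))" by (rule sa_disj[OF h1 h2])
  then show ?case by simp
qed
lemma sa_all: "sa (\<lambda>x. \<forall>a\<in>(UNIV::'b::finite set). Q x a) \<Longrightarrow> sa (\<lambda>x. \<forall>a::'b. Q x a)" by simp




lemma inner2: "(u::real^2) \<bullet> w = u$1*w$1 + u$2*w$2" by (simp add: inner_vec_def sum_2)
lemma vec2_eq: "(u::real^2) = w \<longleftrightarrow> u$1 = w$1 \<and> u$2 = w$2" by (simp add: vec_eq_iff forall_2)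

definition cross :: "real^2 \<Rightarrow> real^2 \<Rightarrow> real" where
  "cross u w = u$1 * w$2 - u$2 * w$1"
definition orient :: "real^2 \<Rightarrow> real^2 \<Rightarrow> real^2 \<Rightarrow> real" where
  "orient p q r = cross (q - p) (r - p)"

lemma cross_zero_param:
  assumes "cross d w = 0" "d \<noteq> 0"
  shows "w = ((w \<bullet> d) / (d \<bullet> d)) *\<^sub>R d"
proof -
  have dd: "d \<bullet> d = d$1*d$1 + d$2*d$2" by (simp add: inner2)
  have "d \<bullet> d > 0" using assms(2) by simp
  then have pos: "d$1*d$1 + d$2*d$2 > 0" using dd by simp
  have c: "d$1 * w$2 = d$2 * w$1" using assms(1) by (simp add: cross_def)
  have e1: "w$1 * (d$1*d$1 + d$2*d$2) - (w$1*d$1 + w$2*d$2) * d$1 = d$2 * (d$2 * w$1 - d$1 * w$2)"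
    by (simp add: algebra_simps)
  have e2: "w$2 * (d$1*d$1 + d$2*d$2) - (w$1*d$1 + w$2*d$2) * d$2 = d$1 * (d$1 * w$2 - d$2 * w$1)"
    by (simp add: algebra_simps)
  have f1: "w$1 * (d$1*d$1 + d$2*d$2) = (w$1*d$1 + w$2*d$2) * d$1"
    using e1 c by simp
  have f2: "w$2 * (d$1*d$1 + d$2*d$2) = (w$1*d$1 + w$2*d$2) * d$2"
    using e2 c by simp
  have g1: "w$1 = (w$1*d$1 + w$2*d$2) * d$1 / (d$1*d$1 + d$2*d$2)"
    using pos by (intro eq_divide_imp f1) linarith
  have g2: "w$2 = (w$1*d$1 + w$2*d$2) * d$2 / (d$1*d$1 + d$2*d$2)"
    using pos by (intro eq_divide_imp f2) linarith
  show ?thesis unfolding vec2_eq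
  proof
    show "w$1 = (((w \<bullet> d) / (d \<bullet> d)) *\<^sub>R d)$1" using g1 by (simp add: inner2 dd)
    show "w$2 = (((w \<bullet> d) / (d \<bullet> d)) *\<^sub>R d)$2" using g2 by (simp add: inner2 dd)
  qed
qed

lemma in_seg_iff:
  "z \<in> closed_segment r s \<longleftrightarrow> cross (s - r) (z - r) = 0 \<and> (z - r) \<bullet> (z - s) \<le> 0"
proof
  assume "z \<in> closed_segment r s"
  then obtain u where u: "0 \<le> u" "u \<le> 1" "z = (1 - u) *\<^sub>R r + u *\<^sub>R s" by (auto simp: in_segment)
  have z1: "z - r = u *\<^sub>R (s - r)" using u(3) by (simp add: algebra_simps)
  have z2: "z - s = (u - 1) *\<^sub>R (s - r)" using u(3) by (simp add: algebra_simps)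
  have "cross (s - r) (z - r) = 0" unfolding z1 by (simp add: cross_def algebra_simps)
  moreover have "(z - r) \<bullet> (z - s) = u * (u - 1) * ((s - r) \<bullet> (s - r))"
    unfolding z1 z2 by (simp add: algebra_simps)
  moreover have "u * (u - 1) \<le> 0" using u by (simp add: mult_nonneg_nonpos)
  ultimately show "cross (s - r) (z - r) = 0 \<and> (z - r) \<bullet> (z - s) \<le> 0"
    by (simp add: mult_nonpos_nonneg)
next
  assume h: "cross (s - r) (z - r) = 0 \<and> (z - r) \<bullet> (z - s) \<le> 0"
  show "z \<in> closed_segment r s"
  proof (cases "s = r")
    case True
    then have "(z - r) \<bullet> (z - r) \<le> 0" using h by simp
    then have "(z - r) \<bullet> (z - r) = 0" by (meson antisym inner_ge_zero)
    then have "z = r" by simp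
    then show ?thesis by simp
  next
    case False
    define d where "d = s - r"
    define u where "u = ((z - r) \<bullet> d) / (d \<bullet> d)"
    have d0: "d \<noteq> 0" using False by (simp add: d_def)
    have zr: "z - r = u *\<^sub>R d" using cross_zero_param[of d "z - r"] h d0 by (simp add: d_def u_def)
    have zs: "z - s = (u - 1) *\<^sub>R d" using zr by (simp add: d_def algebra_simps)
    have "(z - r) \<bullet> (z - s) = u * (u - 1) * (d \<bullet> d)" unfolding zr zs by (simp add: algebra_simps)
    moreover have "d \<bullet> d > 0" using d0 by simp
    ultimately have "u * (u - 1) \<le> 0" using h mult_pos_pos[of "u * (u - 1)" "d \<bullet> d"]
      by (smt (verit))
    then have "0 \<le> u" "u \<le> 1" by (smt (verit) mult_neg_neg mult_pos_pos)+
    moreover have "z = (1 - u) *\<^sub>R r + u *\<^sub>R s" using zr by (simp add: d_def algebra_simps)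
    ultimately show ?thesis by (auto simp: in_segment)
  qed
qed


lemma cross_diff: "cross a (b - c) = cross a b - cross a c" by (simp add: cross_def algebra_simps)
lemma cross_diff1: "cross (b - c) a = cross b a - cross c a" by (simp add: cross_def algebra_simps)

lemma orient_comb: "orient p q ((1 - u) *\<^sub>R r + u *\<^sub>R s) = (1 - u) * orient p q r + u * orient p q s"
  by (simp add: orient_def cross_def algebra_simps)

lemma orient_seg: "z \<in> closed_segment p q \<Longrightarrow> orient p q z = 0"
  using in_seg_iff[of z p q] by (simp add: orient_def)

lemma cross_unique:
  assumes "cross a v = 0" "cross b v = 0" "cross a b \<noteq> 0" shows "v = 0"
proof -
  have i1: "v$1 * cross a b = b$1 * cross a v - a$1 * cross b v" by (simp add: cross_def algebra_simps)
  have i2: "v$2 * cross a b = b$2 * cross a v - a$2 * cross b v" by (simp add: cross_def algebra_simps)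
  have "v$1 = 0" using i1 assms by simp
  moreover have "v$2 = 0" using i2 assms by simp
  ultimately show ?thesis by (simp add: vec2_eq)
qed

lemma seg_line:
  fixes p d :: "real^2"
  assumes "min b c \<le> a" "a \<le> max b c"
  shows "p + a *\<^sub>R d \<in> closed_segment (p + b *\<^sub>R d) (p + c *\<^sub>R d)"
proof (cases "b = c")
  case True
  then have "a = b" using assms by simp
  then show ?thesis using True by simp
next
  case False
  define \<mu> where "\<mu> = (a - b) / (c - b)"
  have m: "0 \<le> \<mu> \<and> \<mu> \<le> 1" using assms False
    by (cases "b < c") (auto simp: \<mu>_def divide_simps min_def max_def split: if_splits)
  have "b + \<mu> * (c - b) = a" using False by (simp add: \<mu>_def)
  then have "p + a *\<^sub>R d = (1 - \<mu>) *\<^sub>R (p + b *\<^sub>R d) + \<mu> *\<^sub>R (p + c *\<^sub>R d)"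
    by (simp add: algebra_simps flip: scaleR_add_left)
  then show ?thesis using m by (auto simp: in_segment)
qed

lemma zero_comb:
  fixes a b u :: real
  assumes "0 < u" "u < 1" "(1 - u) * a + u * b = 0" "a * b \<ge> 0"
  shows "a = 0 \<and> b = 0"
proof (rule ccontr)
  assume "\<not> (a = 0 \<and> b = 0)"
  then consider "a > 0" | "a < 0" | "a = 0 \<and> b \<noteq> 0" by linarith
  then show False
  proof cases
    case 1
    then have "b \<ge> 0" using assms(4) by (metis mult_pos_neg not_le)
    then have "(1 - u) * a > 0" "u * b \<ge> 0" using 1 assms by simp_all
    then show False using assms(3) by linarith
  next
    case 2
    then have "b \<le> 0" using assms(4) by (metis mult_neg_pos not_le)
    then have "(1 - u) * a < 0" "u * b \<le> 0" using 2 assms by (simp_all add: mult_pos_neg mult_nonneg_nonpos)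
    then show False using assms(3) by linarith
  next
    case 3
    then show False using assms by simp
  qed
qed


definition segcond :: "real^2 \<Rightarrow> real^2 \<Rightarrow> real^2 \<Rightarrow> real^2 \<Rightarrow> bool" where
  "segcond p q r s \<longleftrightarrow> closed_segment p q \<inter> closed_segment r s \<subseteq> {p, q} \<inter> {r, s}"

definition segchar :: "real^2 \<Rightarrow> real^2 \<Rightarrow> real^2 \<Rightarrow> real^2 \<Rightarrow> bool" where
  "segchar p q r s \<longleftrightarrow>
     (p \<in> closed_segment r s \<longrightarrow> p = r \<or> p = s) \<and> (q \<in> closed_segment r s \<longrightarrow> q = r \<or> q = s) \<and>
     (r \<in> closed_segment p q \<longrightarrow> r = p \<or> r = q) \<and> (s \<in> closed_segment p q \<longrightarrow> s = p \<or> s = q) \<and>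
     \<not> (orient p q r * orient p q s < 0 \<and> orient r s p * orient r s q < 0) \<and>
     \<not> (p \<noteq> q \<and> (p = r \<and> q = s \<or> p = s \<and> q = r))"

lemma line_param:
  assumes "p \<noteq> q" "orient p q r = 0"
  obtains \<rho> where "r = p + \<rho> *\<^sub>R (q - p)"
proof -
  have "q - p \<noteq> 0" using assms by simp
  then have "r - p = (((r - p) \<bullet> (q - p)) / ((q - p) \<bullet> (q - p))) *\<^sub>R (q - p)"
    using cross_zero_param[of "q - p" "r - p"] assms by (simp add: orient_def)
  then have "r = p + (((r - p) \<bullet> (q - p)) / ((q - p) \<bullet> (q - p))) *\<^sub>R (q - p)"
    by (metis add.commute diff_add_cancel)
  then show ?thesis using that by blast
qed

lemma col_case:
  assumes pq: "p \<noteq> q" and rs: "r \<noteq> s" and o1: "orient p q r = 0" and o2: "orient p q s = 0"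
    and z1: "z \<in> closed_segment p q" and z2: "z \<in> closed_segment r s"
    and zn: "z \<noteq> p" "z \<noteq> q" "z \<noteq> r" "z \<noteq> s"
    and m1: "p \<in> closed_segment r s \<longrightarrow> p = r \<or> p = s"
    and m2: "q \<in> closed_segment r s \<longrightarrow> q = r \<or> q = s"
    and m3: "r \<in> closed_segment p q \<longrightarrow> r = p \<or> r = q"
    and m4: "s \<in> closed_segment p q \<longrightarrow> s = p \<or> s = q"
    and nc: "\<not> (p = r \<and> q = s \<or> p = s \<and> q = r)"
  shows False
proof -
  define d where "d = q - p"
  have d0: "d \<noteq> 0" using pq by (simp add: d_def)
  obtain \<rho> where r: "r = p + \<rho> *\<^sub>R d" using line_param[OF pq o1] d_def by blast
  obtain \<sigma> where s: "s = p + \<sigma> *\<^sub>R d" using line_param[OF pq o2] d_def by blast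
  have P: "p = p + 0 *\<^sub>R d" by simp
  have Q: "q = p + 1 *\<^sub>R d" by (simp add: d_def)
  have inj: "p + a *\<^sub>R d = p + b *\<^sub>R d \<longleftrightarrow> a = b" for a b using d0 by simp
  obtain t where t: "0 \<le> t" "t \<le> 1" "z = (1 - t) *\<^sub>R p + t *\<^sub>R q" using z1 by (auto simp: in_segment)
  obtain u where u: "0 \<le> u" "u \<le> 1" "z = (1 - u) *\<^sub>R r + u *\<^sub>R s" using z2 by (auto simp: in_segment)
  have zt: "z = p + t *\<^sub>R d" using t(3) by (simp add: d_def algebra_simps)
  have zu: "z = p + ((1 - u) * \<rho> + u * \<sigma>) *\<^sub>R d" using u(3) r s by (simp add: algebra_simps)
  have teq: "t = (1 - u) * \<rho> + u * \<sigma>" using zt zu inj by metis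
  have "t \<noteq> 0" using zn(1) zt by auto
  have "t \<noteq> 1" using zn(2) zt Q by auto
  have "u \<noteq> 0" using zn(3) u(3) by auto
  have "u \<noteq> 1" using zn(4) u(3) by auto
  have "\<rho> \<noteq> \<sigma>" using rs r s by auto
  have F1: "0 \<le> \<rho> \<and> \<rho> \<le> 1 \<longrightarrow> \<rho> = 0 \<or> \<rho> = 1"
  proof
    assume "0 \<le> \<rho> \<and> \<rho> \<le> 1"
    then have "r \<in> closed_segment p q" using seg_line[of 0 1 \<rho> p d] r P Q by (metis max_def min_def zero_le_one)
    then have "r = p \<or> r = q" using m3 by blast
    then show "\<rho> = 0 \<or> \<rho> = 1" using r P Q inj by metis
  qed
  have F2: "0 \<le> \<sigma> \<and> \<sigma> \<le> 1 \<longrightarrow> \<sigma> = 0 \<or> \<sigma> = 1"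
  proof
    assume "0 \<le> \<sigma> \<and> \<sigma> \<le> 1"
    then have "s \<in> closed_segment p q" using seg_line[of 0 1 \<sigma> p d] s P Q by (metis max_def min_def zero_le_one)
    then have "s = p \<or> s = q" using m4 by blast
    then show "\<sigma> = 0 \<or> \<sigma> = 1" using s P Q inj by metis
  qed
  have F3: "min \<rho> \<sigma> \<le> 0 \<and> 0 \<le> max \<rho> \<sigma> \<longrightarrow> \<rho> = 0 \<or> \<sigma> = 0"
  proof
    assume "min \<rho> \<sigma> \<le> 0 \<and> 0 \<le> max \<rho> \<sigma>"
    then have "p \<in> closed_segment r s" using seg_line[of \<rho> \<sigma> 0 p d] r s P by metis
    then have "p = r \<or> p = s" using m1 by blast
    then show "\<rho> = 0 \<or> \<sigma> = 0" using r s P inj by metis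
  qed
  have F4: "min \<rho> \<sigma> \<le> 1 \<and> 1 \<le> max \<rho> \<sigma> \<longrightarrow> \<rho> = 1 \<or> \<sigma> = 1"
  proof
    assume "min \<rho> \<sigma> \<le> 1 \<and> 1 \<le> max \<rho> \<sigma>"
    then have "q \<in> closed_segment r s" using seg_line[of \<rho> \<sigma> 1 p d] r s Q by metis
    then have "q = r \<or> q = s" using m2 by blast
    then show "\<rho> = 1 \<or> \<sigma> = 1" using r s Q inj by metis
  qed
  have between: "min \<rho> \<sigma> < t \<and> t < max \<rho> \<sigma>"
  proof (cases "\<rho> < \<sigma>")
    case True
    note lt = True
    have "t - \<rho> = u * (\<sigma> - \<rho>)" "\<sigma> - t = (1 - u) * (\<sigma> - \<rho>)" using teq by (simp_all add: algebra_simps)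
    moreover have "u * (\<sigma> - \<rho>) > 0" "(1 - u) * (\<sigma> - \<rho>) > 0"
      using lt u \<open>u \<noteq> 0\<close> \<open>u \<noteq> 1\<close> by simp_all
    moreover have "min \<rho> \<sigma> = \<rho>" "max \<rho> \<sigma> = \<sigma>" using lt by auto
    ultimately show ?thesis by linarith
  next
    case False
    then have F: "\<sigma> < \<rho>" using \<open>\<rho> \<noteq> \<sigma>\<close> by simp
    have "t - \<sigma> = (1 - u) * (\<rho> - \<sigma>)" "\<rho> - t = u * (\<rho> - \<sigma>)" using teq by (simp_all add: algebra_simps)
    moreover have "u * (\<rho> - \<sigma>) > 0" "(1 - u) * (\<rho> - \<sigma>) > 0"
      using F u \<open>u \<noteq> 0\<close> \<open>u \<noteq> 1\<close> by simp_all
    moreover have "min \<rho> \<sigma> = \<sigma>" "max \<rho> \<sigma> = \<rho>" using F by auto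
    ultimately show ?thesis by linarith
  qed
  have "(\<rho> = 0 \<and> \<sigma> = 1) \<or> (\<rho> = 1 \<and> \<sigma> = 0)"
    using F1 F2 F3 F4 between t \<open>t \<noteq> 0\<close> \<open>t \<noteq> 1\<close> \<open>\<rho> \<noteq> \<sigma>\<close>
    by (auto simp: min_def max_def split: if_splits)
  then show False using nc r s P Q by auto
qed


lemma segchar_imp_segcond:
  assumes "segchar p q r s" shows "segcond p q r s"
  unfolding segcond_def
proof
  fix z assume "z \<in> closed_segment p q \<inter> closed_segment r s"
  then have z1: "z \<in> closed_segment p q" and z2: "z \<in> closed_segment r s" by auto
  note c = assms[unfolded segchar_def]
  have m1: "p \<in> closed_segment r s \<longrightarrow> p = r \<or> p = s" and m2: "q \<in> closed_segment r s \<longrightarrow> q = r \<or> q = s"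
    and m3: "r \<in> closed_segment p q \<longrightarrow> r = p \<or> r = q" and m4: "s \<in> closed_segment p q \<longrightarrow> s = p \<or> s = q"
    and cr: "\<not> (orient p q r * orient p q s < 0 \<and> orient r s p * orient r s q < 0)"
    and nc0: "\<not> (p \<noteq> q \<and> (p = r \<and> q = s \<or> p = s \<and> q = r))" using c by blast+
  show "z \<in> {p, q} \<inter> {r, s}"
  proof (cases "z \<in> {p, q, r, s}")
    case True
    then show ?thesis using c z1 z2 by auto
  next
    case False
    then have zn: "z \<noteq> p" "z \<noteq> q" "z \<noteq> r" "z \<noteq> s" by auto
    have pq: "p \<noteq> q" using z1 zn by auto
    have rs: "r \<noteq> s" using z2 zn by auto
    obtain t where t: "0 \<le> t" "t \<le> 1" "z = (1 - t) *\<^sub>R p + t *\<^sub>R q" using z1 by (auto simp: in_segment)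
    obtain u where u: "0 \<le> u" "u \<le> 1" "z = (1 - u) *\<^sub>R r + u *\<^sub>R s" using z2 by (auto simp: in_segment)
    have "t \<noteq> 0" "t \<noteq> 1" using t zn by auto
    have "u \<noteq> 0" "u \<noteq> 1" using u zn by auto
    have e1: "(1 - u) * orient p q r + u * orient p q s = 0"
      using orient_seg[OF z1] orient_comb[of p q u r s] u(3) by simp
    have e2: "(1 - t) * orient r s p + t * orient r s q = 0"
      using orient_seg[OF z2] orient_comb[of r s t p q] t(3) by simp
    show ?thesis
    proof (cases "orient p q r * orient p q s < 0")
      case True
      then have "orient r s p * orient r s q \<ge> 0" using cr by auto
      then have "orient r s p = 0 \<and> orient r s q = 0"
        using zero_comb[OF _ _ e2] t \<open>t \<noteq> 0\<close> \<open>t \<noteq> 1\<close> by simp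
      moreover have "\<not> (r = p \<and> s = q \<or> r = q \<and> s = p)" using nc0 pq by blast
      ultimately have False
        using col_case[OF rs pq _ _ z2 z1 zn(3,4,1,2) m3 m4 m1 m2] by blast
      then show ?thesis ..
    next
      case False
      then have "orient p q r = 0 \<and> orient p q s = 0"
        using zero_comb[OF _ _ e1] u \<open>u \<noteq> 0\<close> \<open>u \<noteq> 1\<close> by simp
      moreover have "\<not> (p = r \<and> q = s \<or> p = s \<and> q = r)" using nc0 pq by blast
      ultimately have False
        using col_case[OF pq rs _ _ z1 z2 zn m1 m2 m3 m4] by blast
      then show ?thesis ..
    qed
  qed
qed

lemma segcond_imp_segchar:
  assumes "segcond p q r s" shows "segchar p q r s"
proof -
  note c = assms[unfolded segcond_def]
  have m: "(p \<in> closed_segment r s \<longrightarrow> p = r \<or> p = s) \<and> (q \<in> closed_segment r s \<longrightarrow> q = r \<or> q = s) \<and>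
     (r \<in> closed_segment p q \<longrightarrow> r = p \<or> r = q) \<and> (s \<in> closed_segment p q \<longrightarrow> s = p \<or> s = q)"
    using c by auto
  have nc: "\<not> (p \<noteq> q \<and> (p = r \<and> q = s \<or> p = s \<and> q = r))"
  proof
    assume h: "p \<noteq> q \<and> (p = r \<and> q = s \<or> p = s \<and> q = r)"
    then have "closed_segment r s = closed_segment p q" by (metis closed_segment_commute)
    then have "midpoint p q \<in> {p, q}" using c midpoint_in_closed_segment[of p q] by blast
    then show False using h by auto
  qed
  have cr: "\<not> (orient p q r * orient p q s < 0 \<and> orient r s p * orient r s q < 0)"
  proof
    assume h: "orient p q r * orient p q s < 0 \<and> orient r s p * orient r s q < 0"
    define o1 o2 o3 o4 where "o1 = orient p q r" "o2 = orient p q s" "o3 = orient r s p" "o4 = orient r s q"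
    have h12: "o1 * o2 < 0" and h34: "o3 * o4 < 0" using h by (simp_all add: o1_o2_o3_o4_def)
    have unit: "0 < x / (x - y) \<and> x / (x - y) < 1" if "x * y < 0" for x y :: real
    proof (cases "x > 0")
      case True
      then have "y < 0" using that by (metis mult_pos_pos not_less_iff_gr_or_eq mult_zero_right)
      then show ?thesis using True by (simp add: divide_simps)
    next
      case False
      then have "x < 0" using that by (cases "x = 0") auto
      then have "y > 0" using that by (metis mult_neg_neg not_less_iff_gr_or_eq mult_zero_right)
      then show ?thesis using \<open>x < 0\<close> by (simp add: divide_simps)
    qed
    have ne: "x - y \<noteq> 0" if "x * y < 0" for x y :: real using that by auto
    define u where "u = o1 / (o1 - o2)"
    define t where "t = o3 / (o3 - o4)"
    define z where "z = (1 - u) *\<^sub>R r + u *\<^sub>R s"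
    define w where "w = (1 - t) *\<^sub>R p + t *\<^sub>R q"
    have u01: "0 < u \<and> u < 1" using unit[OF h12] by (simp add: u_def)
    have t01: "0 < t \<and> t < 1" using unit[OF h34] by (simp add: t_def)
    have oz: "orient p q z = 0"
    proof -
      have "orient p q z = (1 - u) * o1 + u * o2" by (simp add: z_def orient_comb o1_o2_o3_o4_def)
      also have "\<dots> = o1 - u * (o1 - o2)" by (simp add: algebra_simps)
      also have "u * (o1 - o2) = o1" using ne[OF h12] by (simp add: u_def)
      finally show ?thesis by simp
    qed
    have ow: "orient r s w = 0"
    proof -
      have "orient r s w = (1 - t) * o3 + t * o4" by (simp add: w_def orient_comb o1_o2_o3_o4_def)
      also have "\<dots> = o3 - t * (o3 - o4)" by (simp add: algebra_simps)
      also have "t * (o3 - o4) = o3" using ne[OF h34] by (simp add: t_def)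
      finally show ?thesis by simp
    qed
    have zs: "z \<in> closed_segment r s" using u01 unfolding in_segment z_def by (intro exI[of _ u]) simp
    have ws: "w \<in> closed_segment p q" using t01 unfolding in_segment w_def by (intro exI[of _ t]) simp
    have "cross (q - p) (z - w) = cross (q - p) (z - p) - cross (q - p) (w - p)" by (simp add: cross_def algebra_simps)
    then have "cross (q - p) (z - w) = 0"
      using oz orient_seg[OF ws] by (simp add: orient_def)
    moreover have "cross (s - r) (z - w) = cross (s - r) (z - r) - cross (s - r) (w - r)" by (simp add: cross_def algebra_simps)
    then have "cross (s - r) (z - w) = 0"
      using ow orient_seg[OF zs] by (simp add: orient_def)
    moreover have "cross (q - p) (s - r) \<noteq> 0"
    proof -
      have "cross (q - p) (s - r) = o2 - o1"
        by (simp add: o1_o2_o3_o4_def orient_def cross_def algebra_simps)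
      then show ?thesis using h12 by auto
    qed
    ultimately have "z - w = 0" by (rule cross_unique)
    then have "z = w" by simp
    then have "z \<in> {r, s}" using c zs ws by auto
    then have "orient p q z \<noteq> 0" using h12 by (auto simp: o1_o2_o3_o4_def)
    then show False using oz by simp
  qed
  show ?thesis unfolding segchar_def using m nc cr by blast
qed




lemma dist_sq: "(q - p) \<bullet> (q - p) = (dist p q)^2"
  by (metis dist_norm norm_minus_commute power2_norm_eq_inner)

lemma xcoord_comb: "xcoord p q ((1 - t) *\<^sub>R r + t *\<^sub>R s) = (1 - t) * xcoord p q r + t * xcoord p q s"
proof -
  have "(1 - t) *\<^sub>R r + t *\<^sub>R s - p = (1 - t) *\<^sub>R (r - p) + t *\<^sub>R (s - p)" by (simp add: algebra_simps)
  then show ?thesis unfolding xcoord_def by (simp add: inner_add_left add_divide_distrib)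
qed

lemma ycoord_comb: "ycoord p q ((1 - t) *\<^sub>R r + t *\<^sub>R s) = (1 - t) * ycoord p q r + t * ycoord p q s"
  unfolding ycoord_def by (simp add: algebra_simps add_divide_distrib diff_divide_distrib)

lemma ycoord_cross: "ycoord p q z = cross (q - p) (z - p) / dist p q"
  by (simp add: ycoord_def cross_def)

lemma xcoord_p: "xcoord p q p = 0" by (simp add: xcoord_def)
lemma xcoord_q: "xcoord p q q = dist p q"
  by (simp add: xcoord_def dist_sq power2_eq_square)

lemma yc_zero_seg:
  assumes L: "dist p q > 0" and y: "ycoord p q z = 0" and x: "0 < xcoord p q z" "xcoord p q z < dist p q"
  shows "z \<in> closed_segment p q" "z \<noteq> p" "z \<noteq> q"
proof -
  show "z \<noteq> p" using x xcoord_p by auto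
  show "z \<noteq> q" using x xcoord_q by auto
  have c: "cross (q - p) (z - p) = 0" using y L by (simp add: ycoord_cross)
  have qp: "q - p \<noteq> 0" using L by auto
  define lam where "lam = xcoord p q z / dist p q"
  have "((z - p) \<bullet> (q - p)) / ((q - p) \<bullet> (q - p)) = lam"
    using L by (simp add: lam_def xcoord_def dist_sq power2_eq_square)
  then have zp: "z - p = lam *\<^sub>R (q - p)" using cross_zero_param[OF c qp] by simp
  have l01: "0 \<le> lam" "lam \<le> 1" using x L by (simp_all add: lam_def divide_simps)
  have "z = (1 - lam) *\<^sub>R p + lam *\<^sub>R q" using zp by (simp add: algebra_simps)
  then show "z \<in> closed_segment p q" using l01 unfolding in_segment by blast
qed

definition loF :: "real^2 \<Rightarrow> real^2 \<Rightarrow> real^2 \<Rightarrow> real^2 \<Rightarrow> real" where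
  "loF p q r s = max (min (xcoord p q r) (xcoord p q s)) 0"
definition hiF :: "real^2 \<Rightarrow> real^2 \<Rightarrow> real^2 \<Rightarrow> real^2 \<Rightarrow> real" where
  "hiF p q r s = min (max (xcoord p q r) (xcoord p q s)) (dist p q)"
definition YF :: "real^2 \<Rightarrow> real^2 \<Rightarrow> real^2 \<Rightarrow> real^2 \<Rightarrow> real \<Rightarrow> real" where
  "YF p q r s x = ycoord p q r + ((x - xcoord p q r) / (xcoord p q s - xcoord p q r)) * (ycoord p q s - ycoord p q r)"
definition YmF :: "real^2 \<Rightarrow> real^2 \<Rightarrow> real^2 \<Rightarrow> real^2 \<Rightarrow> real" where
  "YmF p q r s = YF p q r s ((loF p q r s + hiF p q r s) / 2)"
definition ordF :: "real^2 \<Rightarrow> real^2 \<Rightarrow> real^2 \<Rightarrow> real^2 \<Rightarrow> real" where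
  "ordF p q r s = (if dist p q = 0 \<or> hiF p q r s \<le> loF p q r s then 0
                   else sgn (YmF p q r s) * (hiF p q r s - loF p q r s))"

lemma S_sub:
  "{x. x \<in> {0..dist p q} \<and> (\<exists>z\<in>closed_segment r s. xcoord p q z = x \<and> P z)} \<subseteq> {loF p q r s..hiF p q r s}"
proof
  fix x assume "x \<in> {x. x \<in> {0..dist p q} \<and> (\<exists>z\<in>closed_segment r s. xcoord p q z = x \<and> P z)}"
  then obtain z where x: "0 \<le> x" "x \<le> dist p q" "z \<in> closed_segment r s" "xcoord p q z = x" by auto
  obtain t where t: "0 \<le> t" "t \<le> 1" "z = (1 - t) *\<^sub>R r + t *\<^sub>R s" using x(3) by (auto simp: in_segment)
  have xe: "x = (1 - t) * xcoord p q r + t * xcoord p q s" using x(4) t(3) xcoord_comb by metis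
  have "min (xcoord p q r) (xcoord p q s) \<le> x \<and> x \<le> max (xcoord p q r) (xcoord p q s)"
  proof -
    define a b where "a = xcoord p q r" "b = xcoord p q s"
    have "x = a + t * (b - a)" using xe by (simp add: a_b_def algebra_simps)
    moreover have "min a b \<le> a + t * (b - a) \<and> a + t * (b - a) \<le> max a b"
    proof (cases "a \<le> b")
      case True
      then have "0 \<le> t * (b - a)" "t * (b - a) \<le> b - a" using t by (simp_all add: mult_left_le_one_le)
      then show ?thesis using True by simp
    next
      case False
      then have "t * (b - a) \<le> 0" "a - b \<ge> t * (a - b)" using t by (simp_all add: mult_nonneg_nonpos mult_left_le_one_le)
      then show ?thesis using False by (simp add: algebra_simps)
    qed
    ultimately show ?thesis by (simp add: a_b_def)
  qed
  then show "x \<in> {loF p q r s..hiF p q r s}" using x by (simp add: loF_def hiF_def)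
qed

lemma meas_bound:
  assumes "S \<subseteq> {lo..hi}"
  shows "0 \<le> measure lebesgue S \<and> measure lebesgue S \<le> max 0 (hi - lo)"
proof (cases "S \<in> sets lebesgue")
  case True
  have "measure lebesgue S \<le> measure lebesgue {lo..hi}"
    by (rule measure_mono_fmeasurable[OF assms True]) simp
  also have "\<dots> \<le> max 0 (hi - lo)"
    by (cases "lo \<le> hi") (simp_all add: content_real)
  finally show ?thesis by simp
next
  case False
  then show ?thesis by (simp add: measure_notin_sets)
qed

lemma meas_full:
  assumes "{lo<..<hi} \<subseteq> S" "S \<subseteq> {lo..hi}" "lo < hi"
  shows "measure lebesgue S = hi - lo"
proof -
  have "negligible ({lo..hi} - S \<union> (S - {lo..hi}))"
  proof (rule negligible_subset[of "{lo, hi}"])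
    show "{lo..hi} - S \<union> (S - {lo..hi}) \<subseteq> {lo, hi}"
    proof
      fix x assume x: "x \<in> {lo..hi} - S \<union> (S - {lo..hi})"
      then have "x \<in> {lo..hi}" "x \<notin> S" using assms(2) by auto
      show "x \<in> {lo, hi}"
      proof (rule ccontr)
        assume "x \<notin> {lo, hi}"
        then have "x \<in> {lo<..<hi}" using \<open>x \<in> {lo..hi}\<close> by auto
        then show False using assms(1) \<open>x \<notin> S\<close> by blast
      qed
    qed
  qed auto
  then have "measure lebesgue S = measure lebesgue {lo..hi}"
    by (intro measure_negligible_symdiff) auto
  then show ?thesis using assms by (simp add: content_real)
qed

lemma meas_small:
  assumes "S \<subseteq> {lo, hi}" shows "measure lebesgue S = 0"
  by (rule negligible_imp_measure0, rule negligible_subset[OF _ assms]) auto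

lemma Ord_bound: "\<bar>Ord p q r s\<bar> \<le> max 0 (hiF p q r s - loF p q r s)"
proof -
  have "0 \<le> d_plus p q r s \<and> d_plus p q r s \<le> max 0 (hiF p q r s - loF p q r s)"
    unfolding d_plus_def by (rule meas_bound[OF S_sub])
  moreover have "0 \<le> d_minus p q r s \<and> d_minus p q r s \<le> max 0 (hiF p q r s - loF p q r s)"
    unfolding d_minus_def by (rule meas_bound[OF S_sub])
  ultimately show ?thesis unfolding Ord_def by linarith
qed


lemma sgn_const:
  fixes f :: "real \<Rightarrow> real"
  assumes c: "continuous_on {u..v} f" and uv: "u \<le> v" and nz: "\<forall>x\<in>{u..v}. f x \<noteq> 0"
  shows "sgn (f u) = sgn (f v)"
proof -
  have fu: "f u \<noteq> 0" and fv: "f v \<noteq> 0" using nz uv by auto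
  show ?thesis
  proof (cases "f u > 0")
    case True
    show ?thesis
    proof (cases "f v > 0")
      case True then show ?thesis using \<open>f u > 0\<close> by simp
    next
      case False
      then have "f v \<le> 0" by simp
      then obtain x where "u \<le> x" "x \<le> v" "f x = 0" using IVT2'[of f v 0 u, OF _ _ uv c] True by auto
      then show ?thesis using nz by auto
    qed
  next
    case False
    then have fu': "f u < 0" using fu by simp
    show ?thesis
    proof (cases "f v < 0")
      case True then show ?thesis using fu' by simp
    next
      case False
      then have "0 \<le> f v" by simp
      then obtain x where "u \<le> x" "x \<le> v" "f x = 0" using IVT'[of f u 0 v, OF _ _ uv c] fu' by auto
      then show ?thesis using nz by auto
    qed
  qed
qed

lemma Ord_formula:
  assumes H: "closed_segment p q \<inter> closed_segment r s \<subseteq> {p, q}"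
  shows "Ord p q r s = ordF p q r s \<and> (dist p q \<noteq> 0 \<and> loF p q r s < hiF p q r s \<longrightarrow> YmF p q r s \<noteq> 0)"
proof -
  define L where "L = dist p q"
  define lo hi where "lo = loF p q r s" "hi = hiF p q r s"
  define a b where "a = xcoord p q r" "b = xcoord p q s"
  define ya yb where "ya = ycoord p q r" "yb = ycoord p q s"
  define Y where "Y = YF p q r s"
  define Sp where "Sp = {x. x \<in> {0..dist p q} \<and> (\<exists>z\<in>closed_segment r s. xcoord p q z = x \<and> ycoord p q z \<ge> 0)}"
  define Sm where "Sm = {x. x \<in> {0..dist p q} \<and> (\<exists>z\<in>closed_segment r s. xcoord p q z = x \<and> ycoord p q z \<le> 0)}"
  have Sp_sub: "Sp \<subseteq> {lo..hi}" unfolding Sp_def lo_hi_def by (rule S_sub)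
  have Sm_sub: "Sm \<subseteq> {lo..hi}" unfolding Sm_def lo_hi_def by (rule S_sub)
  have Ord_eq: "Ord p q r s = measure lebesgue Sp - measure lebesgue Sm"
    by (simp add: Ord_def d_plus_def d_minus_def Sp_def Sm_def)
  show ?thesis
  proof (cases "L = 0 \<or> hi \<le> lo")
    case True
    have "hi \<le> lo"
    proof (cases "L = 0")
      case True
      then have "a = 0" "b = 0" by (simp_all add: a_b_def xcoord_def L_def)
      then show ?thesis using True by (simp add: lo_hi_def loF_def hiF_def a_b_def L_def)
    next
      case False then show ?thesis using \<open>L = 0 \<or> hi \<le> lo\<close> by simp
    qed
    then have "measure lebesgue Sp = 0" "measure lebesgue Sm = 0"
      using meas_bound[OF Sp_sub] meas_bound[OF Sm_sub] measure_nonneg[of lebesgue Sp]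
        measure_nonneg[of lebesgue Sm] by auto
    then show ?thesis using True \<open>hi \<le> lo\<close> by (simp add: Ord_eq ordF_def lo_hi_def L_def)
  next
    case False
    then have Lp: "L > 0" and lohi: "lo < hi" by (auto simp: L_def)
    have lo0: "0 \<le> lo" and hiL: "hi \<le> L" and lomin: "min a b \<le> lo" and himax: "hi \<le> max a b"
      by (simp_all add: lo_hi_def loF_def hiF_def a_b_def L_def)
    have ab: "a \<noteq> b" using lohi lomin himax by auto
    have Yx: "Y x = ya + ((x - a) / (b - a)) * (yb - ya)" for x
      by (simp add: Y_def YF_def a_b_def ya_yb_def)
    have K1: "\<exists>z\<in>closed_segment r s. xcoord p q z = x \<and> ycoord p q z = Y x" if x: "lo < x" "x < hi" for x
    proof -
      define t where "t = (x - a) / (b - a)"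
      have t01: "0 \<le> t \<and> t \<le> 1"
      proof (cases "a < b")
        case True
        then have "a < x" "x < b" using x lomin himax by auto
        then show ?thesis using True by (simp add: t_def divide_simps)
      next
        case False
        then have "b < a" using ab by simp
        then have "b < x" "x < a" using x lomin himax by auto
        then show ?thesis using \<open>b < a\<close> by (simp add: t_def divide_simps)
      qed
      define z where "z = (1 - t) *\<^sub>R r + t *\<^sub>R s"
      have "z \<in> closed_segment r s" using t01 unfolding in_segment z_def by (intro exI[of _ t]) simp
      moreover have "xcoord p q z = x"
      proof -
        have "xcoord p q z = a + t * (b - a)" unfolding z_def xcoord_comb by (simp add: a_b_def algebra_simps)
        also have "\<dots> = x" using ab by (simp add: t_def)
        finally show ?thesis .
      qed
      moreover have "ycoord p q z = Y x"
        unfolding z_def ycoord_comb by (simp add: ya_yb_def Yx t_def algebra_simps)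
      ultimately show ?thesis by blast
    qed
    have K2: "ycoord p q z = Y x" if zz: "z \<in> closed_segment r s" "xcoord p q z = x" for x z
    proof -
      obtain t where t: "z = (1 - t) *\<^sub>R r + t *\<^sub>R s" using zz(1) unfolding in_segment by blast
      have "x = a + t * (b - a)" using zz(2) unfolding t xcoord_comb by (simp add: a_b_def algebra_simps)
      then have "t = (x - a) / (b - a)" using ab by (simp add: field_simps)
      then show ?thesis unfolding t ycoord_comb by (simp add: ya_yb_def Yx algebra_simps)
    qed
    have K3: "Y x \<noteq> 0" if x: "lo < x" "x < hi" for x
    proof
      assume Y0: "Y x = 0"
      obtain z where z: "z \<in> closed_segment r s" "xcoord p q z = x" "ycoord p q z = Y x" using K1[OF x] by blast
      have "0 < xcoord p q z" "xcoord p q z < dist p q" using z x lo0 hiL by (auto simp: L_def)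
      then have "z \<in> closed_segment p q" "z \<noteq> p" "z \<noteq> q"
        using yc_zero_seg[of p q z] Lp z Y0 by (auto simp: L_def)
      then show False using H z(1) by blast
    qed
    have Ycont: "continuous_on S Y" for S
      unfolding Yx[abs_def] using ab by (intro continuous_intros) auto
    define m where "m = (lo + hi) / 2"
    have m: "lo < m" "m < hi" using lohi by (simp_all add: m_def)
    have sgnc: "sgn (Y x) = sgn (Y m)" if x: "lo < x" "x < hi" for x
    proof -
      have nz: "\<forall>y\<in>{min x m..max x m}. Y y \<noteq> 0" using K3 x m by auto
      have "sgn (Y (min x m)) = sgn (Y (max x m))" by (rule sgn_const[OF Ycont _ nz]) simp
      then show ?thesis by (cases "x \<le> m") (auto simp: min_def max_def)
    qed
    have Ym0: "Y m \<noteq> 0" using K3[OF m] .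
    have YmF: "YmF p q r s = Y m" by (simp add: YmF_def Y_def m_def lo_hi_def)
    have x0L: "x \<in> {0..dist p q}" if "lo < x" "x < hi" for x using that lo0 hiL by (auto simp: L_def)
    show ?thesis
    proof (cases "Y m > 0")
      case True
      have pos: "Y x > 0" if "lo < x" "x < hi" for x using sgnc[OF that] True by (simp add: sgn_if split: if_splits)
      have "{lo<..<hi} \<subseteq> Sp"
      proof
        fix x assume x: "x \<in> {lo<..<hi}"
        then obtain z where "z\<in>closed_segment r s" "xcoord p q z = x" "ycoord p q z = Y x" using K1 by auto
        then show "x \<in> Sp" using pos x x0L unfolding Sp_def by force
      qed
      then have mp: "measure lebesgue Sp = hi - lo" using meas_full Sp_sub lohi by blast
      have "Sm \<subseteq> {lo, hi}"
      proof
        fix x assume x: "x \<in> Sm"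
        then obtain z where z: "z\<in>closed_segment r s" "xcoord p q z = x" "ycoord p q z \<le> 0" unfolding Sm_def by auto
        have "x \<in> {lo..hi}" using x Sm_sub by auto
        moreover have "\<not> (lo < x \<and> x < hi)" using K2[OF z(1,2)] z(3) pos by force
        ultimately show "x \<in> {lo, hi}" by auto
      qed
      then have "measure lebesgue Sm = 0" by (rule meas_small)
      then show ?thesis using mp False Ym0 True
        by (simp add: Ord_eq ordF_def YmF lo_hi_def[symmetric] L_def[symmetric])
    next
      case False
      then have neg: "Y m < 0" using Ym0 by simp
      have negx: "Y x < 0" if "lo < x" "x < hi" for x using sgnc[OF that] neg by (simp add: sgn_if split: if_splits)
      have "{lo<..<hi} \<subseteq> Sm"
      proof
        fix x assume x: "x \<in> {lo<..<hi}"
        then obtain z where "z\<in>closed_segment r s" "xcoord p q z = x" "ycoord p q z = Y x" using K1 by auto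
        then show "x \<in> Sm" using negx x x0L unfolding Sm_def by force
      qed
      then have mm: "measure lebesgue Sm = hi - lo" using meas_full Sm_sub lohi by blast
      have "Sp \<subseteq> {lo, hi}"
      proof
        fix x assume x: "x \<in> Sp"
        then obtain z where z: "z\<in>closed_segment r s" "xcoord p q z = x" "ycoord p q z \<ge> 0" unfolding Sp_def by auto
        have "x \<in> {lo..hi}" using x Sp_sub by auto
        moreover have "\<not> (lo < x \<and> x < hi)" using K2[OF z(1,2)] z(3) negx by force
        ultimately show "x \<in> {lo, hi}" by auto
      qed
      then have "measure lebesgue Sp = 0" by (rule meas_small)
      then show ?thesis using mm \<open>\<not> (L = 0 \<or> hi \<le> lo)\<close> Ym0 neg
        by (simp add: Ord_eq ordF_def YmF lo_hi_def[symmetric] L_def[symmetric])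
    qed
  qed
qed




lemma cont_Ord:
  fixes fp fq fr fs :: "'a::topological_space \<Rightarrow> real^2"
  assumes cp: "continuous_on X fp" and cq: "continuous_on X fq"
    and cr: "continuous_on X fr" and cs: "continuous_on X fs"
    and W: "\<And>C. C \<in> X \<Longrightarrow> closed_segment (fp C) (fq C) \<inter> closed_segment (fr C) (fs C) \<subseteq> {fp C, fq C}"
  shows "continuous_on X (\<lambda>C. Ord (fp C) (fq C) (fr C) (fs C))"
  unfolding continuous_on_def
proof
  fix C0 assume C0: "C0 \<in> X"
  define F where "F = at C0 within X"
  have tp: "(fp \<longlongrightarrow> fp C0) F" using cp C0 by (simp add: continuous_on_def F_def)
  have tq: "(fq \<longlongrightarrow> fq C0) F" using cq C0 by (simp add: continuous_on_def F_def)
  have tr: "(fr \<longlongrightarrow> fr C0) F" using cr C0 by (simp add: continuous_on_def F_def)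
  have ts: "(fs \<longlongrightarrow> fs C0) F" using cs C0 by (simp add: continuous_on_def F_def)
  define f where "f C = Ord (fp C) (fq C) (fr C) (fs C)" for C
  define Lf where "Lf C = dist (fp C) (fq C)" for C
  define lof where "lof C = loF (fp C) (fq C) (fr C) (fs C)" for C
  define hif where "hif C = hiF (fp C) (fq C) (fr C) (fs C)" for C
  define ymf where "ymf C = YmF (fp C) (fq C) (fr C) (fs C)" for C
  have bound: "\<bar>f C\<bar> \<le> max 0 (hif C - lof C)" for C
    unfolding f_def hif_def lof_def by (rule Ord_bound)
  have bL: "max 0 (hif C - lof C) \<le> Lf C" for C
    by (simp add: hif_def lof_def hiF_def loF_def Lf_def)
  have form: "f C = ordF (fp C) (fq C) (fr C) (fs C)" and ymnz: "Lf C \<noteq> 0 \<and> lof C < hif C \<longrightarrow> ymf C \<noteq> 0"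
    if "C \<in> X" for C
    using Ord_formula[OF W[OF that]] by (simp_all add: f_def Lf_def lof_def hif_def ymf_def)
  have evX: "eventually (\<lambda>C. C \<in> X) F" by (simp add: F_def eventually_at_filter)
  have tL: "(Lf \<longlongrightarrow> Lf C0) F" unfolding Lf_def by (intro tendsto_intros tp tq)
  show "(f \<longlongrightarrow> f C0) F"
  proof (cases "Lf C0 = 0")
    case True
    then have f0: "f C0 = 0" using form[OF C0] by (simp add: ordF_def Lf_def)
    have "(f \<longlongrightarrow> 0) F"
    proof (rule Lim_null_comparison)
      show "eventually (\<lambda>C. norm (f C) \<le> Lf C) F"
        using bound bL by (intro always_eventually allI) (metis order_trans real_norm_def)
      show "(Lf \<longlongrightarrow> 0) F" using tL True by simp
    qed
    then show ?thesis using f0 by simp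
  next
    case False
    then have L0: "dist (fp C0) (fq C0) \<noteq> 0" by (simp add: Lf_def)
    have txc: "((\<lambda>C. xcoord (fp C) (fq C) (g C)) \<longlongrightarrow> xcoord (fp C0) (fq C0) (g C0)) F"
      if tg: "(g \<longlongrightarrow> g C0) F" for g
      unfolding xcoord_def using L0 by (intro tendsto_intros tp tq tg) auto
    have tyc: "((\<lambda>C. ycoord (fp C) (fq C) (g C)) \<longlongrightarrow> ycoord (fp C0) (fq C0) (g C0)) F"
      if tg: "(g \<longlongrightarrow> g C0) F" for g
      unfolding ycoord_def using L0 by (intro tendsto_intros tp tq tg) auto
    have tlo: "(lof \<longlongrightarrow> lof C0) F"
      unfolding lof_def loF_def by (intro tendsto_intros txc tr ts)
    have thi: "(hif \<longlongrightarrow> hif C0) F"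
      unfolding hif_def hiF_def by (intro tendsto_intros txc tr ts tp tq)
    show ?thesis
    proof (cases "hif C0 \<le> lof C0")
      case True
      then have f0: "f C0 = 0" using form[OF C0] by (simp add: ordF_def hif_def lof_def)
      have "(f \<longlongrightarrow> 0) F"
      proof (rule Lim_null_comparison)
        show "eventually (\<lambda>C. norm (f C) \<le> max 0 (hif C - lof C)) F"
          using bound by (intro always_eventually allI) simp
        have "((\<lambda>C. max 0 (hif C - lof C)) \<longlongrightarrow> max 0 (hif C0 - lof C0)) F"
          by (intro tendsto_intros tlo thi)
        then show "((\<lambda>C. max 0 (hif C - lof C)) \<longlongrightarrow> 0) F" using True by simp
      qed
      then show ?thesis using f0 by simp
    next
      case False
      then have lh: "lof C0 < hif C0" by simp
      have ab: "xcoord (fp C0) (fq C0) (fs C0) - xcoord (fp C0) (fq C0) (fr C0) \<noteq> 0"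
        using lh by (auto simp: lof_def hif_def loF_def hiF_def)
      have ym0: "ymf C0 \<noteq> 0" using ymnz[OF C0] lh False L0 by (simp add: Lf_def)
      have tym: "(ymf \<longlongrightarrow> ymf C0) F"
        unfolding ymf_def YmF_def YF_def
        using ab by (intro tendsto_intros tlo[unfolded lof_def] thi[unfolded hif_def] txc tyc tr ts) auto
      have tlim: "((\<lambda>C. sgn (ymf C) * (hif C - lof C)) \<longlongrightarrow> sgn (ymf C0) * (hif C0 - lof C0)) F"
        by (intro tendsto_intros tym ym0 tlo thi)
      have f0: "f C0 = sgn (ymf C0) * (hif C0 - lof C0)"
        using form[OF C0] lh L0 by (simp add: ordF_def hif_def lof_def ymf_def)
      have ev1: "eventually (\<lambda>C. Lf C > 0) F"
      proof -
        have "0 < Lf C0" using L0 by (simp add: Lf_def)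
        then show ?thesis by (rule order_tendstoD(1)[OF tL])
      qed
      have ev2: "eventually (\<lambda>C. 0 < hif C - lof C) F"
      proof -
        have "0 < hif C0 - lof C0" using lh by simp
        then show ?thesis by (rule order_tendstoD(1)[OF tendsto_diff[OF thi tlo]])
      qed
      have "eventually (\<lambda>C. sgn (ymf C) * (hif C - lof C) = f C) F"
        using ev1 ev2 evX
      proof eventually_elim
        case (elim C)
        then show ?case using form[OF elim(3)] by (simp add: ordF_def hif_def lof_def ymf_def Lf_def)
      qed
      then show ?thesis using Lim_transform_eventually[OF tlim] f0 by simp
    qed
  qed
qed




lemma zero_joined_cong:
  assumes "\<And>e. e \<in> E \<Longrightarrow> ell1 e = ell2 e"
  shows "zero_joined E src tgt ell1 = zero_joined E src tgt ell2"
proof -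
  have "{(src e, tgt e) | e. e \<in> E \<and> ell1 e = 0} = {(src e, tgt e) | e. e \<in> E \<and> ell2 e = 0}"
  proof (rule Collect_cong)
    fix x
    show "(\<exists>e. x = (src e, tgt e) \<and> e \<in> E \<and> ell1 e = 0) \<longleftrightarrow> (\<exists>e. x = (src e, tgt e) \<and> e \<in> E \<and> ell2 e = 0)"
      using assms by metis
  qed
  then show ?thesis unfolding zero_joined_def[abs_def] by (simp only: Let_def)
qed

lemma nontouching_cong:
  assumes "\<And>e. e \<in> E \<Longrightarrow> ell1 e = ell2 e"
  shows "nontouching E src tgt ell1 C = nontouching E src tgt ell2 C"
  by (simp only: nontouching_def zero_joined_cong[OF assms])

definition NT :: "'e set \<Rightarrow> ('e \<Rightarrow> 'v::finite) \<Rightarrow> ('e \<Rightarrow> 'v) \<Rightarrow> (real^2)^'v \<Rightarrow> bool" where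
  "NT E src tgt C \<longleftrightarrow> nontouching E src tgt (\<lambda>e. dist (C $ src e) (C $ tgt e)) C"

lemma X_char:
  fixes E :: "'e::finite set" and src tgt :: "'e \<Rightarrow> 'v::finite"
  assumes "linkage E src tgt ell"
  shows "C \<in> (\<Union>eps\<in>{0..}. NConf E src tgt ell eps) \<longleftrightarrow> NT E src tgt C"
proof
  assume "C \<in> (\<Union>eps\<in>{0..}. NConf E src tgt ell eps)"
  then obtain eps ell' where conf: "is_configuration E src tgt ell' C" and nt: "nontouching E src tgt ell' C"
    unfolding NConf_def by blast
  have "nontouching E src tgt ell' C = nontouching E src tgt (\<lambda>e. dist (C $ src e) (C $ tgt e)) C"
    by (rule nontouching_cong) (use conf in \<open>simp add: is_configuration_def\<close>)
  then show "NT E src tgt C" unfolding NT_def using nt by simp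
next
  assume nt: "NT E src tgt C"
  define ell' where "ell' e = dist (C $ src e) (C $ tgt e)" for e
  define eps where "eps = (\<Sum>e\<in>E. \<bar>ell e - ell' e\<bar>)"
  have "eps \<ge> 0" unfolding eps_def by (simp add: sum_nonneg)
  moreover have "eps_related E eps ell ell'"
    unfolding eps_related_def eps_def
  proof
    fix e assume "e \<in> E"
    then show "\<bar>ell e - ell' e\<bar> \<le> (\<Sum>e\<in>E. \<bar>ell e - ell' e\<bar>)"
      by (intro member_le_sum) auto
  qed
  moreover have "linkage E src tgt ell'"
    using assms by (simp add: linkage_def ell'_def)
  moreover have "is_configuration E src tgt ell' C" by (simp add: is_configuration_def ell'_def)
  moreover have "nontouching E src tgt ell' C" using nt by (simp add: NT_def ell'_def[abs_def])
  ultimately have "C \<in> NConf E src tgt ell eps" unfolding NConf_def by blast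
  then show "C \<in> (\<Union>eps\<in>{0..}. NConf E src tgt ell eps)" using \<open>eps \<ge> 0\<close> by auto
qed

lemma Ord_self: "Ord p q p q = 0"
proof -
  have "ycoord p q z = 0" if "z \<in> closed_segment p q" for z
    using that in_seg_iff[of z p q] by (simp add: ycoord_cross)
  then have "{x. x \<in> {0..dist p q} \<and> (\<exists>z\<in>closed_segment p q. xcoord p q z = x \<and> ycoord p q z \<ge> 0)} =
             {x. x \<in> {0..dist p q} \<and> (\<exists>z\<in>closed_segment p q. xcoord p q z = x \<and> ycoord p q z \<le> 0)}"
    by auto
  then show ?thesis by (simp add: Ord_def d_plus_def d_minus_def)
qed

lemma NT_seg:
  assumes "NT E src tgt C" "e1 \<in> E" "e2 \<in> E" "e1 \<noteq> e2"
  shows "segcond (C $ src e1) (C $ tgt e1) (C $ src e2) (C $ tgt e2)"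
  using assms unfolding NT_def nontouching_def segcond_def bar_segment_def by blast

lemma continuity:
  fixes E :: "'e::finite set" and src tgt :: "'e \<Rightarrow> 'v::finite"
  assumes "\<And>C. C \<in> X \<Longrightarrow> NT E src tgt C"
  shows "continuous_on X (Annot E src tgt)"
proof -
  have comp: "continuous_on X (\<lambda>C. if fst ij \<in> E \<and> snd ij \<in> E
               then Ord (C $ src (fst ij)) (C $ tgt (fst ij)) (C $ src (snd ij)) (C $ tgt (snd ij))
               else 0)" for ij
  proof (cases "fst ij \<in> E \<and> snd ij \<in> E")
    case False then show ?thesis by (simp only: if_False) (rule continuous_on_const)
  next
    case True
    show ?thesis
    proof (cases "fst ij = snd ij")
      case True
      have "(\<lambda>C. if fst ij \<in> E \<and> snd ij \<in> E
               then Ord (C $ src (fst ij)) (C $ tgt (fst ij)) (C $ src (snd ij)) (C $ tgt (snd ij))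
               else 0) = (\<lambda>C. 0)" unfolding True Ord_self if_cancel ..
      then show ?thesis by (simp only:) (rule continuous_on_const)
    next
      case False
      have "continuous_on X (\<lambda>C. Ord (C $ src (fst ij)) (C $ tgt (fst ij)) (C $ src (snd ij)) (C $ tgt (snd ij)))"
      proof (rule cont_Ord)
        fix C assume "C \<in> X"
        then have "segcond (C $ src (fst ij)) (C $ tgt (fst ij)) (C $ src (snd ij)) (C $ tgt (snd ij))"
          using NT_seg[OF assms] \<open>fst ij \<in> E \<and> snd ij \<in> E\<close> False by blast
        then show "closed_segment (C $ src (fst ij)) (C $ tgt (fst ij)) \<inter> closed_segment (C $ src (snd ij)) (C $ tgt (snd ij))
                   \<subseteq> {C $ src (fst ij), C $ tgt (fst ij)}"
          unfolding segcond_def by blast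
      qed (rule continuous_on_component[OF continuous_on_id])+
      then show ?thesis using \<open>fst ij \<in> E \<and> snd ij \<in> E\<close> by simp
    qed
  qed
  show ?thesis unfolding Annot_def[abs_def]
    by (intro continuous_on_Pair continuous_on_id continuous_on_vec_lambda comp)
qed




definition ppoly :: "('a::euclidean_space \<Rightarrow> real^2) \<Rightarrow> bool" where
  "ppoly P \<longleftrightarrow> (\<lambda>y. P y $ 1) \<in> poly_fun \<and> (\<lambda>y. P y $ 2) \<in> poly_fun"

lemma ppoly_bl: fixes f :: "'a::euclidean_space \<Rightarrow> real^2" assumes "bounded_linear f" shows "ppoly f"
proof -
  have "(\<lambda>y. f y $ k) \<in> poly_fun" for k
    by (rule poly_linear, rule bounded_linear.linear, rule bounded_linear_compose[OF bounded_linear_vec_nth assms])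
  then show ?thesis by (simp add: ppoly_def)
qed

lemma ppoly_diff: "ppoly P \<Longrightarrow> ppoly Q \<Longrightarrow> ppoly (\<lambda>y. P y - Q y)"
  unfolding ppoly_def by (simp add: poly_diff)

lemma poly_inner: "ppoly P \<Longrightarrow> ppoly Q \<Longrightarrow> (\<lambda>y. P y \<bullet> Q y) \<in> poly_fun"
  unfolding ppoly_def inner2 by (intro poly_fun.add poly_fun.mult) auto

lemma poly_cross: "ppoly P \<Longrightarrow> ppoly Q \<Longrightarrow> (\<lambda>y. cross (P y) (Q y)) \<in> poly_fun"
  unfolding ppoly_def cross_def by (intro poly_diff poly_fun.mult) auto

lemma poly_orient: "ppoly P \<Longrightarrow> ppoly Q \<Longrightarrow> ppoly R \<Longrightarrow> (\<lambda>y. orient (P y) (Q y) (R y)) \<in> poly_fun"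
  unfolding orient_def by (intro poly_cross ppoly_diff)

lemma sa_peq: "ppoly P \<Longrightarrow> ppoly Q \<Longrightarrow> sa (\<lambda>y. P y = Q y)"
  unfolding ppoly_def vec2_eq by (intro sa_conj sa_eq) auto

lemma sa_inseg: "ppoly Z \<Longrightarrow> ppoly R \<Longrightarrow> ppoly S \<Longrightarrow> sa (\<lambda>y. Z y \<in> closed_segment (R y) (S y))"
  unfolding in_seg_iff by (intro sa_conj sa_eq sa_le poly_cross poly_inner ppoly_diff poly_fun.const)

lemma sa_segcond:
  assumes "ppoly P" "ppoly Q" "ppoly R" "ppoly S"
  shows "sa (\<lambda>y. segcond (P y) (Q y) (R y) (S y))"
proof -
  have e: "segcond p q r s \<longleftrightarrow> segchar p q r s" for p q r s
    using segcond_imp_segchar segchar_imp_segcond by blast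
  show ?thesis unfolding e segchar_def
    using assms
    by (intro sa_conj sa_imp sa_disj sa_not sa_inseg sa_peq sa_less poly_fun.mult poly_orient poly_fun.const)
qed

definition Phi2 :: "real \<Rightarrow> real \<Rightarrow> real \<Rightarrow> real \<Rightarrow> real \<Rightarrow> real \<Rightarrow> real \<Rightarrow> real \<Rightarrow> bool" where
  "Phi2 D \<alpha> \<beta> gr gs v lo hi \<longleftrightarrow> ((D = 0 \<or> hi \<le> lo) \<and> v = 0) \<or>
     (D \<noteq> 0 \<and> lo < hi \<and> v * v * D = (hi - lo) * (hi - lo) \<and>
      0 < v * (2 * gr * (\<beta> - \<alpha>) + (lo + hi - 2 * \<alpha>) * (gs - gr)) * (\<beta> - \<alpha>))"

definition Phi :: "real \<Rightarrow> real \<Rightarrow> real \<Rightarrow> real \<Rightarrow> real \<Rightarrow> real \<Rightarrow> bool" where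
  "Phi D \<alpha> \<beta> gr gs v \<longleftrightarrow> Phi2 D \<alpha> \<beta> gr gs v (max (min \<alpha> \<beta>) 0) (min (max \<alpha> \<beta>) D)"

lemma sa_Phi2:
  assumes "D \<in> poly_fun" "A \<in> poly_fun" "B \<in> poly_fun" "G \<in> poly_fun" "H \<in> poly_fun" "V \<in> poly_fun"
    "Lo \<in> poly_fun" "Hi \<in> poly_fun"
  shows "sa (\<lambda>y. Phi2 (D y) (A y) (B y) (G y) (H y) (V y) (Lo y) (Hi y))"
  unfolding Phi2_def using assms
  by (intro sa_conj sa_disj sa_not sa_eq sa_le sa_less poly_fun.mult poly_fun.add poly_diff poly_fun.const)

lemma split_lohi:
  "P (max (min a b) 0) (min (max a b) D) \<longleftrightarrow>
   (a \<le> b \<longrightarrow> (a \<le> 0 \<longrightarrow> (b \<le> D \<longrightarrow> P 0 b) \<and> (\<not> b \<le> D \<longrightarrow> P 0 D)) \<and>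
               (\<not> a \<le> 0 \<longrightarrow> (b \<le> D \<longrightarrow> P a b) \<and> (\<not> b \<le> D \<longrightarrow> P a D))) \<and>
   (\<not> a \<le> b \<longrightarrow> (b \<le> 0 \<longrightarrow> (a \<le> D \<longrightarrow> P 0 a) \<and> (\<not> a \<le> D \<longrightarrow> P 0 D)) \<and>
               (\<not> b \<le> 0 \<longrightarrow> (a \<le> D \<longrightarrow> P b a) \<and> (\<not> a \<le> D \<longrightarrow> P b D)))"
  by (simp add: min_def max_def)

lemma sa_Phi:
  assumes "D \<in> poly_fun" "A \<in> poly_fun" "B \<in> poly_fun" "G \<in> poly_fun" "H \<in> poly_fun" "V \<in> poly_fun"
  shows "sa (\<lambda>y. Phi (D y) (A y) (B y) (G y) (H y) (V y))"
  unfolding Phi_def split_lohi[where P = "Phi2 _ _ _ _ _ _"]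
  using assms
  by (intro sa_conj sa_imp sa_not sa_le sa_Phi2 poly_fun.const)


lemma scale_le: "(L::real) > 0 \<Longrightarrow> a * L \<le> b * L \<longleftrightarrow> a \<le> b" by simp
lemma scale_le0: "(L::real) > 0 \<Longrightarrow> a * L \<le> 0 \<longleftrightarrow> a \<le> 0" by (simp add: mult_le_0_iff)
lemma scale_lo: "(L::real) > 0 \<Longrightarrow> max (min (a * L) (b * L)) 0 = max (min a b) 0 * L"
  by (simp add: min_def max_def scale_le scale_le0)
lemma scale_hi: "(L::real) > 0 \<Longrightarrow> min (max (a * L) (b * L)) (c * L) = min (max a b) c * L"
  by (simp add: min_def max_def scale_le)

lemma sgn_char:
  fixes k c Y v :: real
  assumes "k > 0" "c > 0" "Y \<noteq> 0"
  shows "v = sgn Y * k \<longleftrightarrow> (v * v = k * k \<and> 0 < v * (c * Y))"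
proof
  assume "v = sgn Y * k"
  then show "v * v = k * k \<and> 0 < v * (c * Y)" using assms
    by (cases "Y > 0") (auto simp: sgn_if mult_pos_pos mult_neg_neg mult_pos_neg)
next
  assume h: "v * v = k * k \<and> 0 < v * (c * Y)"
  then have "(v - k) * (v + k) = 0" by (simp add: algebra_simps)
  then have vk: "v = k \<or> v = - k" by (simp add: eq_neg_iff_add_eq_0)
  show "v = sgn Y * k"
  proof (cases "Y > 0")
    case True
    have cY: "c * Y > 0" using True assms by simp
    have "v \<noteq> - k"
    proof
      assume "v = - k"
      then have "0 < - (k * (c * Y))" using h by simp
      moreover have "k * (c * Y) > 0" using cY assms by simp
      ultimately show False by simp
    qed
    then show ?thesis using vk True by simp
  next
    case False
    then have Yn: "Y < 0" using assms by simp
    then have "v \<noteq> k" using h assms by (auto simp: zero_less_mult_iff)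
    then show ?thesis using vk Yn by simp
  qed
qed

lemma Ord_Phi:
  assumes H: "closed_segment p q \<inter> closed_segment r s \<subseteq> {p, q}"
  shows "v = Ord p q r s \<longleftrightarrow>
    Phi ((q - p) \<bullet> (q - p)) ((r - p) \<bullet> (q - p)) ((s - p) \<bullet> (q - p)) (cross (q - p) (r - p)) (cross (q - p) (s - p)) v"
proof -
  note OF = Ord_formula[OF H]
  define L where "L = dist p q"
  define a b where "a = xcoord p q r" "b = xcoord p q s"
  define ya yb where "ya = ycoord p q r" "yb = ycoord p q s"
  define lo hi where "lo = loF p q r s" "hi = hiF p q r s"
  define Ym where "Ym = YmF p q r s"
  have D: "(q - p) \<bullet> (q - p) = L * L" by (simp add: L_def dist_sq power2_eq_square)
  show ?thesis
  proof (cases "L = 0")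
    case True
    then have "Ord p q r s = 0" using OF by (simp add: ordF_def L_def)
    moreover have "(q - p) \<bullet> (q - p) = 0" using D True by simp
    ultimately show ?thesis by (simp add: Phi_def Phi2_def)
  next
    case False
    then have Lp: "L > 0" by (simp add: L_def)
    have al: "(r - p) \<bullet> (q - p) = a * L" using Lp by (simp add: a_b_def xcoord_def L_def)
    have bl: "(s - p) \<bullet> (q - p) = b * L" using Lp by (simp add: a_b_def xcoord_def L_def)
    have gr: "cross (q - p) (r - p) = ya * L" using Lp by (simp add: ya_yb_def ycoord_cross L_def)
    have gs: "cross (q - p) (s - p) = yb * L" using Lp by (simp add: ya_yb_def ycoord_cross L_def)
    have lo': "max (min (a * L) (b * L)) 0 = lo * L" using scale_lo[OF Lp] by (simp add: lo_hi_def loF_def a_b_def)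
    have hi': "min (max (a * L) (b * L)) (L * L) = hi * L" using scale_hi[OF Lp, of a b L]
      by (simp add: lo_hi_def hiF_def a_b_def L_def)
    have PhiE: "Phi ((q - p) \<bullet> (q - p)) ((r - p) \<bullet> (q - p)) ((s - p) \<bullet> (q - p)) (cross (q - p) (r - p)) (cross (q - p) (s - p)) v
       \<longleftrightarrow> Phi2 (L * L) (a * L) (b * L) (ya * L) (yb * L) v (lo * L) (hi * L)"
      unfolding Phi_def D al bl gr gs lo' hi' ..
    have LL: "L * L \<noteq> 0" using Lp by simp
    show ?thesis
    proof (cases "hi \<le> lo")
      case True
      then have "Ord p q r s = 0" using OF by (simp add: ordF_def lo_hi_def)
      moreover have "hi * L \<le> lo * L" using True Lp by (simp add: mult_right_mono)
      ultimately show ?thesis unfolding PhiE Phi2_def by auto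
    next
      case False
      then have lh: "lo < hi" by simp
      have lhL: "lo * L < hi * L" using lh Lp by simp
      have Ym0: "Ym \<noteq> 0" using OF lh Lp by (simp add: Ym_def lo_hi_def L_def)
      have OrdE: "Ord p q r s = sgn Ym * (hi - lo)" using OF lh Lp
        by (simp add: ordF_def Ym_def lo_hi_def L_def)
      have ab: "b - a \<noteq> 0" using lh by (auto simp: lo_hi_def loF_def hiF_def a_b_def)
      have YmE: "Ym = ya + (((lo + hi) / 2 - a) / (b - a)) * (yb - ya)"
        by (simp add: Ym_def YmF_def YF_def a_b_def ya_yb_def lo_hi_def)
      have key: "2 * (ya * L) * (b * L - a * L) + (lo * L + hi * L - 2 * (a * L)) * (yb * L - ya * L)
                 = L * L * (2 * (b - a) * Ym)"
        using ab by (simp add: YmE field_simps)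
      have c: "(2 * (ya * L) * (b * L - a * L) + (lo * L + hi * L - 2 * (a * L)) * (yb * L - ya * L)) * (b * L - a * L)
               = (2 * L * L * L * ((b - a) * (b - a))) * Ym"
        unfolding key by (simp add: algebra_simps)
      have "(b - a) * (b - a) > 0" using ab by (cases "b - a > 0") (auto simp: zero_less_mult_iff)
      then have cpos: "2 * L * L * L * ((b - a) * (b - a)) > 0" using Lp by simp
      have "Phi2 (L * L) (a * L) (b * L) (ya * L) (yb * L) v (lo * L) (hi * L)
            \<longleftrightarrow> v * v * (L * L) = (hi * L - lo * L) * (hi * L - lo * L) \<and>
                0 < v * ((2 * L * L * L * ((b - a) * (b - a))) * Ym)"
        unfolding Phi2_def using LL lhL c by (auto simp: mult.assoc)
      also have "\<dots> \<longleftrightarrow> v * v = (hi - lo) * (hi - lo) \<and> 0 < v * ((2 * L * L * L * ((b - a) * (b - a))) * Ym)"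
      proof -
        have "v * v * (L * L) = (hi * L - lo * L) * (hi * L - lo * L) \<longleftrightarrow> v * v * (L * L) = (hi - lo) * (hi - lo) * (L * L)"
          by (simp add: algebra_simps)
        also have "\<dots> \<longleftrightarrow> v * v = (hi - lo) * (hi - lo)" using LL by simp
        finally show ?thesis by simp
      qed
      also have "\<dots> \<longleftrightarrow> v = sgn Ym * (hi - lo)"
        using sgn_char[of "hi - lo" "2 * L * L * L * ((b - a) * (b - a))" Ym v] lh cpos Ym0 by simp
      finally show ?thesis unfolding PhiE OrdE by simp
    qed
  qed
qed




definition zjS :: "('e \<Rightarrow> 'v) \<Rightarrow> ('e \<Rightarrow> 'v) \<Rightarrow> 'e set \<Rightarrow> 'v \<Rightarrow> 'v \<Rightarrow> bool" where
  "zjS src tgt S u w \<longleftrightarrow> (let Z = {(src e, tgt e) | e. e \<in> S} in (u, w) \<in> (Z \<union> Z\<inverse>)\<^sup>*)"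

lemma zj_char:
  "zero_joined E src tgt (\<lambda>e. dist (C $ src e) (C $ tgt e)) u w \<longleftrightarrow>
   (\<exists>S\<in>Pow E. (\<forall>e\<in>E. (C $ src e = C $ tgt e) \<longleftrightarrow> e \<in> S) \<and> zjS src tgt S u w)"
proof -
  define S0 where "S0 = {e \<in> E. C $ src e = C $ tgt e}"
  have Zeq: "{(src e, tgt e) | e. e \<in> E \<and> dist (C $ src e) (C $ tgt e) = 0} = {(src e, tgt e) | e. e \<in> S0}"
    by (simp add: S0_def)
  have zj: "zero_joined E src tgt (\<lambda>e. dist (C $ src e) (C $ tgt e)) u w \<longleftrightarrow> zjS src tgt S0 u w"
    unfolding zero_joined_def zjS_def Zeq ..
  have uniq: "S = S0" if "S \<in> Pow E" "\<forall>e\<in>E. (C $ src e = C $ tgt e) \<longleftrightarrow> e \<in> S" for S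
    using that by (auto simp: S0_def)
  have S0P: "S0 \<in> Pow E" "\<forall>e\<in>E. (C $ src e = C $ tgt e) \<longleftrightarrow> e \<in> S0" by (auto simp: S0_def)
  show ?thesis
  proof
    assume "zero_joined E src tgt (\<lambda>e. dist (C $ src e) (C $ tgt e)) u w"
    then show "\<exists>S\<in>Pow E. (\<forall>e\<in>E. (C $ src e = C $ tgt e) \<longleftrightarrow> e \<in> S) \<and> zjS src tgt S u w"
      using zj S0P by blast
  next
    assume "\<exists>S\<in>Pow E. (\<forall>e\<in>E. (C $ src e = C $ tgt e) \<longleftrightarrow> e \<in> S) \<and> zjS src tgt S u w"
    then obtain S where "S \<in> Pow E" "\<forall>e\<in>E. (C $ src e = C $ tgt e) \<longleftrightarrow> e \<in> S" "zjS src tgt S u w" by blast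
    then show "zero_joined E src tgt (\<lambda>e. dist (C $ src e) (C $ tgt e)) u w"
      using zj uniq by blast
  qed
qed

lemma NT_char:
  "NT E src tgt C \<longleftrightarrow>
    (\<forall>e1\<in>E. \<forall>e2\<in>E. e1 \<noteq> e2 \<longrightarrow> segcond (C $ src e1) (C $ tgt e1) (C $ src e2) (C $ tgt e2)) \<and>
    (\<forall>u\<in>UNIV. \<forall>w\<in>UNIV. (C $ u = C $ w) \<longleftrightarrow>
        (\<exists>S\<in>Pow E. (\<forall>e\<in>E. (C $ src e = C $ tgt e) \<longleftrightarrow> e \<in> S) \<and> zjS src tgt S u w))"
  unfolding NT_def nontouching_def segcond_def bar_segment_def zj_char by simp

lemma ppoly_fst: "ppoly (\<lambda>y::((real^2)^'v) \<times> ('b::euclidean_space). fst y $ v)"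
  by (rule ppoly_bl, rule bounded_linear_compose[OF bounded_linear_vec_nth bounded_linear_fst])

lemma ppoly_fst_snd: "ppoly (\<lambda>y::('a::euclidean_space) \<times> ((real^2)^'v) \<times> ('b::euclidean_space). fst (snd y) $ v)"
  by (rule ppoly_bl, rule bounded_linear_compose[OF bounded_linear_vec_nth
        bounded_linear_compose[OF bounded_linear_fst bounded_linear_snd]])

lemma poly_A: "(\<lambda>y::('a::euclidean_space) \<times> ('b::euclidean_space) \<times> (real^'i::finite). snd (snd y) $ i) \<in> poly_fun"
  by (rule poly_linear, rule bounded_linear.linear, rule bounded_linear_compose[OF bounded_linear_vec_nth
        bounded_linear_compose[OF bounded_linear_snd bounded_linear_snd]])

lemma sa_NT:
  fixes E :: "'e::finite set" and src tgt :: "'e \<Rightarrow> 'v::finite"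
  shows "sa (\<lambda>y::((real^2)^'v) \<times> ('b::euclidean_space). NT E src tgt (fst y))"
  unfolding NT_char
  by (intro sa_conj sa_ball sa_imp sa_const sa_segcond ppoly_fst sa_iff sa_peq sa_bex finite_Pow_iff[THEN iffD2]
        finite finite_UNIV)


definition Rel :: "'e set \<Rightarrow> ('e \<Rightarrow> 'v::finite) \<Rightarrow> ('e \<Rightarrow> 'v) \<Rightarrow> 'e \<times> 'e \<Rightarrow> (real^2)^'v \<Rightarrow> real \<Rightarrow> bool" where
  "Rel E src tgt ij C a \<longleftrightarrow>
    (if fst ij \<in> E \<and> snd ij \<in> E \<and> fst ij \<noteq> snd ij then
       Phi ((C $ tgt (fst ij) - C $ src (fst ij)) \<bullet> (C $ tgt (fst ij) - C $ src (fst ij)))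
           ((C $ src (snd ij) - C $ src (fst ij)) \<bullet> (C $ tgt (fst ij) - C $ src (fst ij)))
           ((C $ tgt (snd ij) - C $ src (fst ij)) \<bullet> (C $ tgt (fst ij) - C $ src (fst ij)))
           (cross (C $ tgt (fst ij) - C $ src (fst ij)) (C $ src (snd ij) - C $ src (fst ij)))
           (cross (C $ tgt (fst ij) - C $ src (fst ij)) (C $ tgt (snd ij) - C $ src (fst ij))) a
     else a = 0)"

lemma ent_Rel:
  assumes "NT E src tgt C"
  shows "a = (if fst ij \<in> E \<and> snd ij \<in> E
               then Ord (C $ src (fst ij)) (C $ tgt (fst ij)) (C $ src (snd ij)) (C $ tgt (snd ij))
               else 0) \<longleftrightarrow> Rel E src tgt ij C a"
proof (cases "fst ij \<in> E \<and> snd ij \<in> E")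
  case False
  then have c: "\<not> (fst ij \<in> E \<and> snd ij \<in> E \<and> fst ij \<noteq> snd ij)" by blast
  show ?thesis unfolding Rel_def if_not_P[OF c] if_not_P[OF False] ..
next
  case True
  show ?thesis
  proof (cases "fst ij = snd ij")
    case True
    then have o: "Ord (C $ src (fst ij)) (C $ tgt (fst ij)) (C $ src (snd ij)) (C $ tgt (snd ij)) = 0"
      using Ord_self by metis
    have c: "\<not> (fst ij \<in> E \<and> snd ij \<in> E \<and> fst ij \<noteq> snd ij)" using True by blast
    show ?thesis unfolding Rel_def if_not_P[OF c] if_P[OF \<open>fst ij \<in> E \<and> snd ij \<in> E\<close>] o ..
  next
    case False
    have "segcond (C $ src (fst ij)) (C $ tgt (fst ij)) (C $ src (snd ij)) (C $ tgt (snd ij))"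
      using NT_seg[OF assms] \<open>fst ij \<in> E \<and> snd ij \<in> E\<close> False by blast
    then have H: "closed_segment (C $ src (fst ij)) (C $ tgt (fst ij)) \<inter> closed_segment (C $ src (snd ij)) (C $ tgt (snd ij))
                   \<subseteq> {C $ src (fst ij), C $ tgt (fst ij)}" unfolding segcond_def by blast
    have c: "fst ij \<in> E \<and> snd ij \<in> E \<and> fst ij \<noteq> snd ij" using False \<open>fst ij \<in> E \<and> snd ij \<in> E\<close> by blast
    show ?thesis unfolding Rel_def if_P[OF c] if_P[OF \<open>fst ij \<in> E \<and> snd ij \<in> E\<close>] by (rule Ord_Phi[OF H])
  qed
qed

lemma sa_Rel:
  fixes E :: "'e::finite set" and src tgt :: "'e \<Rightarrow> 'v::finite"
  shows "sa (\<lambda>y::((real^2)^'v) \<times> ('b::euclidean_space) \<times> (real^('e \<times> 'e)). Rel E src tgt ij (fst y) (snd (snd y) $ ij))"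
proof (cases "fst ij \<in> E \<and> snd ij \<in> E \<and> fst ij \<noteq> snd ij")
  case True
  show ?thesis unfolding Rel_def if_P[OF True]
    by (intro sa_Phi poly_inner poly_cross ppoly_diff ppoly_fst poly_A)
next
  case False
  show ?thesis unfolding Rel_def if_not_P[OF False]
    by (intro sa_eq poly_A poly_fun.const)
qed

lemma graph_eq:
  fixes E :: "'e::finite set" and src tgt :: "'e \<Rightarrow> 'v::finite"
  assumes XNT: "\<And>C. C \<in> X \<longleftrightarrow> NT E src tgt C"
  shows "{(x, Annot E src tgt x) | x. x \<in> X} =
    {y. NT E src tgt (fst y) \<and> (\<forall>v\<in>UNIV. fst (snd y) $ v = fst y $ v) \<and>
        (\<forall>ij\<in>UNIV. Rel E src tgt ij (fst y) (snd (snd y) $ ij))}"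
  (is "?G = ?R")
proof
  show "?G \<subseteq> ?R"
  proof
    fix y assume "y \<in> ?G"
    then obtain x where y: "y = (x, Annot E src tgt x)" and x: "x \<in> X" by blast
    have nt: "NT E src tgt x" using x XNT by blast
    have r: "Rel E src tgt ij x (if fst ij \<in> E \<and> snd ij \<in> E
               then Ord (x $ src (fst ij)) (x $ tgt (fst ij)) (x $ src (snd ij)) (x $ tgt (snd ij))
               else 0)" for ij
      by (rule ent_Rel[OF nt, THEN iffD1]) (rule refl)
    show "y \<in> ?R" unfolding y Annot_def mem_Collect_eq fst_conv snd_conv vec_lambda_beta using nt r by blast
  qed
next
  show "?R \<subseteq> ?G"
  proof
    fix y assume "y \<in> ?R"
    then have nt: "NT E src tgt (fst y)" and e1: "\<forall>v. fst (snd y) $ v = fst y $ v"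
      and e2: "\<forall>ij. Rel E src tgt ij (fst y) (snd (snd y) $ ij)" by auto
    have "fst (snd y) = fst y" using e1 by (simp add: vec_eq_iff)
    moreover have "snd (snd y) = (\<chi> ij. if fst ij \<in> E \<and> snd ij \<in> E
               then Ord (fst y $ src (fst ij)) (fst y $ tgt (fst ij)) (fst y $ src (snd ij)) (fst y $ tgt (snd ij))
               else 0)"
      using e2 ent_Rel[OF nt] by (simp add: vec_eq_iff)
    ultimately have "y = (fst y, Annot E src tgt (fst y))"
      by (simp add: Annot_def prod_eq_iff)
    moreover have "fst y \<in> X" using nt XNT by blast
    ultimately show "y \<in> ?G" by blast
  qed
qed

theorem mainTheorem2:
  fixes E :: "'e::finite set" and src tgt :: "'e \<Rightarrow> 'v::finite" and ell :: "'e \<Rightarrow> real"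
  assumes "linkage E src tgt ell"
  defines "X \<equiv> (\<Union>eps\<in>{0..}. NConf E src tgt ell eps)"
  shows "inj_on (Annot E src tgt) X \<and>
         semialgebraic_map_on X (Annot E src tgt) \<and>
         continuous_on X (Annot E src tgt)"
proof (intro conjI)
  have XNT: "C \<in> X \<longleftrightarrow> NT E src tgt C" for C
    unfolding X_def by (rule X_char[OF assms(1)])
  show "inj_on (Annot E src tgt) X"
    by (rule inj_onI) (simp add: Annot_def)
  have "sa (\<lambda>y::((real^2)^'v) \<times> ((real^2)^'v) \<times> (real^('e \<times> 'e)).
          NT E src tgt (fst y) \<and> (\<forall>v\<in>UNIV. fst (snd y) $ v = fst y $ v) \<and>
          (\<forall>ij\<in>UNIV. Rel E src tgt ij (fst y) (snd (snd y) $ ij)))"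
    by (intro sa_conj sa_NT sa_ball sa_Rel sa_peq ppoly_fst ppoly_fst_snd finite_UNIV finite)
  then show "semialgebraic_map_on X (Annot E src tgt)"
    unfolding semialgebraic_map_on_def graph_eq[OF XNT] sa_def .
  show "continuous_on X (Annot E src tgt)"
    by (rule continuity) (simp add: XNT)
qed


end
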